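(* Let $\Lambda\in\mathcal H$ be of integral type and let $\tilde\Lambda\in\mathcal H$ be of $\Lambda$-integral type, with associated left coideal subalgebra $\mathcal A_{\tilde\Lambda}$ and homomorphism $\pi:\mathcal A_{\tilde\Lambda}\to\mathcal H$. Then for every $a\in\mathcal A_{\tilde\Lambda}$, $$(1\otimes a)\Delta(\tilde\Lambda)=(S(\pi(a))\otimes 1)\Delta(\tilde\Lambda).$$ Moreover: (1) $\mathcal V_{\tilde\Lambda}\subset\mathcal A_{\tilde\Lambda}$, and $\mathcal V_{\tilde\Lambda}$ is a left ideal of $\mathcal A_{\tilde\Lambda}$ which is faithful as a left $\mathcal A_{\tilde\Lambda}$-module (i.e. if $a\in\mathcal A_{\tilde\Lambda}$ and $av=0$ for all $v\in\mathcal V_{\tilde\Lambda}$ then $a=0$); (2) $\dim\mathcal A_{\tilde\Lambda}<\infty$; (3) ${}_{\tilde\Lambda}\mathcal V$ is a right $\mathcal A_{\tilde\Lambda}$-module via $x\cdot a:=S(\pi(a))x$ for $a\in\mathcal A_{\tilde\Lambda}$, $x\in{}_{\tilde\Lambda}\mathcal V$; (4) the linear map $U:\mathcal V_{\tilde\Lambda}'\to{}_{\tilde\Lambda}\mathcal V$, $U(\nu)=(\mathrm{id}\otimes\nu)(\Delta(\tilde\Lambda))$, is an isomorphism of right $\mathcal A_{\tilde\Lambda}$-modules, where $\mathcal V_{\tilde\Lambda}'$ carries the right module structure $(\nu\cdot a)(v)=\nu(av)$; (5) $\tilde\Lambda$ is non-degenerate if and only if $\mathcal V_{\tilde\Lambda}=\mathcal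 A_{\tilde\Lambda}$.
   Context: $k$ is a field; $\mathcal H$ is a Hopf algebra over $k$ with comultiplication $\Delta$, counit $\varepsilon$, invertible antipode $S$, and $\mathcal H'$ denotes its linear dual. A left coideal is a subspace $V\subset\mathcal H$ with $\Delta(V)\subset\mathcal H\otimes V$; a left coideal subalgebra is a subalgebra containing $1$ which is a left coideal. For $\Lambda\in\mathcal H$ put $\mathcal V_\Lambda=\{(\nu\otimes\mathrm{id})\Delta(\Lambda):\nu\in\mathcal H'\}$ and ${}_\Lambda\mathcal V=\{(\mathrm{id}\otimes\nu)\Delta(\Lambda):\nu\in\mathcal H'\}$. A non-zero $\Lambda\in\mathcal H$ is of integral type if $\Delta(\Lambda)(1\otimes\Lambda)=\Lambda\otimes\Lambda$. For $\Lambda$ of integral type, a non-zero $\tilde\Lambda\in\mathcal H$ is of $\Lambda$-integral type if $\Delta(\tilde\Lambda)(1\otimes\tilde\Lambda)=\Lambda\otimes\tilde\Lambda$; it is called non-degenerate if $1\in\mathcal V_{\tilde\Lambda}$. For such $\tilde\Lambda$, $\mathcal A_{\tilde\Lambda}=\{a\in\mathcal H:\ \Delta(a)(1\otimes\tilde\Lambda)=b\otimes\tilde\Lambda\text{ for some }b\in\mathcal H\}$; this is a left coideal subalgebra, the element $b$ is uniquely determined by $a$ and denoted $\pi(a)$, and $\pi:\mathcal A_{\tilde\Lambda}\to\mathcal H$ is an injective algebra homomorphism. *)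

theory Defs
  imports Main "HOL.Vector_Spaces"
begin

text \<open>
The Hopf algebra H is a type 'h :: ring_1
(the algebra multiplication and unit) together with a scalar multiplication
sc :: 'k \<Rightarrow> 'h \<Rightarrow> 'h making it a k-algebra.
Elements of H \<otimes> H (resp. H \<otimes> H \<otimes> H) are represented by finite formal sums, i.e. lists of
pairs (resp. triples); two formal sums denote the same tensor iff they agree under all
functionals phi \<otimes> psi (resp. phi \<otimes> psi \<otimes> chi) with phi, psi, chi in the linear dual H'.
This is exactly equality in the algebraic tensor product over a field.
\<close>

definition lin_fun :: "('k::field \<Rightarrow> 'h::ring_1 \<Rightarrow> 'h) \<Rightarrow> ('h \<Rightarrow> 'k) \<Rightarrow> bool" where
  "lin_fun sc \<phi> \<longleftrightarrow> Vector_Spaces.linear sc (*) \<phi>"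

definition teq2 :: "('k::field \<Rightarrow> 'h::ring_1 \<Rightarrow> 'h) \<Rightarrow> ('h \<times> 'h) list \<Rightarrow> ('h \<times> 'h) list \<Rightarrow> bool" where
  "teq2 sc t u \<longleftrightarrow> (\<forall>\<phi> \<psi>. lin_fun sc \<phi> \<longrightarrow> lin_fun sc \<psi> \<longrightarrow>
      (\<Sum>(x,y)\<leftarrow>t. \<phi> x * \<psi> y) = (\<Sum>(x,y)\<leftarrow>u. \<phi> x * \<psi> y))"

definition teq3 :: "('k::field \<Rightarrow> 'h::ring_1 \<Rightarrow> 'h) \<Rightarrow> ('h \<times> 'h \<times> 'h) list \<Rightarrow> ('h \<times> 'h \<times> 'h) list \<Rightarrow> bool" where
  "teq3 sc t u \<longleftrightarrow> (\<forall>\<phi> \<psi> \<chi>. lin_fun sc \<phi> \<longrightarrow> lin_fun sc \<psi> \<longrightarrow> lin_fun sc \<chi> \<longrightarrow>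
      (\<Sum>(x,y,z)\<leftarrow>t. \<phi> x * \<psi> y * \<chi> z) = (\<Sum>(x,y,z)\<leftarrow>u. \<phi> x * \<psi> y * \<chi> z))"

definition tmul :: "('h::ring_1 \<times> 'h) list \<Rightarrow> ('h \<times> 'h) list \<Rightarrow> ('h \<times> 'h) list" where
  "tmul t u = concat (map (\<lambda>(a,b). map (\<lambda>(c,d). (a * c, b * d)) u) t)"

definition hopf_algebra ::
  "('k::field \<Rightarrow> 'h::ring_1 \<Rightarrow> 'h) \<Rightarrow> ('h \<Rightarrow> ('h \<times> 'h) list) \<Rightarrow> ('h \<Rightarrow> 'k) \<Rightarrow> ('h \<Rightarrow> 'h) \<Rightarrow> bool" where
  "hopf_algebra sc \<Delta> \<epsilon> S \<longleftrightarrow>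
     \<comment> \<open>H is a k-algebra\<close>
     vector_space sc \<and>
     (\<forall>c x y. sc c (x * y) = sc c x * y) \<and>
     (\<forall>c x y. sc c (x * y) = x * sc c y) \<and>
     \<comment> \<open>comultiplication: linear, multiplicative, unital, coassociative\<close>
     (\<forall>x y. teq2 sc (\<Delta> (x + y)) (\<Delta> x @ \<Delta> y)) \<and>
     (\<forall>c x. teq2 sc (\<Delta> (sc c x)) (map (\<lambda>(a,b). (sc c a, b)) (\<Delta> x))) \<and>
     (\<forall>x y. teq2 sc (\<Delta> (x * y)) (tmul (\<Delta> x) (\<Delta> y))) \<and>
     teq2 sc (\<Delta> 1) [(1,1)] \<and>
     (\<forall>x. teq3 sc (concat (map (\<lambda>(a,b). map (\<lambda>(p,q). (p,q,b)) (\<Delta> a)) (\<Delta> x)))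
                   (concat (map (\<lambda>(a,b). map (\<lambda>(p,q). (a,p,q)) (\<Delta> b)) (\<Delta> x)))) \<and>
     \<comment> \<open>counit: linear, multiplicative, unital, counit axioms\<close>
     lin_fun sc \<epsilon> \<and> (\<forall>x y. \<epsilon> (x * y) = \<epsilon> x * \<epsilon> y) \<and> \<epsilon> 1 = 1 \<and>
     (\<forall>x. (\<Sum>(a,b)\<leftarrow>\<Delta> x. sc (\<epsilon> a) b) = x) \<and>
     (\<forall>x. (\<Sum>(a,b)\<leftarrow>\<Delta> x. sc (\<epsilon> b) a) = x) \<and>
     \<comment> \<open>antipode: linear, antipode axioms, invertible\<close>
     Vector_Spaces.linear sc sc S \<and>
     (\<forall>x. (\<Sum>(a,b)\<leftarrow>\<Delta> x. S a * b) = sc (\<epsilon> x) 1) \<and>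
     (\<forall>x. (\<Sum>(a,b)\<leftarrow>\<Delta> x. a * S b) = sc (\<epsilon> x) 1) \<and>
     bij S"

text \<open>V_Lambda = {(nu \<otimes> id) Delta(Lambda)} and _Lambda V = {(id \<otimes> nu) Delta(Lambda)}.\<close>
definition Vr :: "('k::field \<Rightarrow> 'h::ring_1 \<Rightarrow> 'h) \<Rightarrow> ('h \<Rightarrow> ('h \<times> 'h) list) \<Rightarrow> 'h \<Rightarrow> 'h set" where
  "Vr sc \<Delta> \<Lambda> = {(\<Sum>(a,b)\<leftarrow>\<Delta> \<Lambda>. sc (\<nu> a) b) | \<nu>. lin_fun sc \<nu>}"

definition Vl :: "('k::field \<Rightarrow> 'h::ring_1 \<Rightarrow> 'h) \<Rightarrow> ('h \<Rightarrow> ('h \<times> 'h) list) \<Rightarrow> 'h \<Rightarrow> 'h set" where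
  "Vl sc \<Delta> \<Lambda> = {(\<Sum>(a,b)\<leftarrow>\<Delta> \<Lambda>. sc (\<nu> b) a) | \<nu>. lin_fun sc \<nu>}"

definition integral_type :: "('k::field \<Rightarrow> 'h::ring_1 \<Rightarrow> 'h) \<Rightarrow> ('h \<Rightarrow> ('h \<times> 'h) list) \<Rightarrow> 'h \<Rightarrow> bool" where
  "integral_type sc \<Delta> \<Lambda> \<longleftrightarrow> \<Lambda> \<noteq> 0 \<and> teq2 sc (tmul (\<Delta> \<Lambda>) [(1, \<Lambda>)]) [(\<Lambda>, \<Lambda>)]"

definition rel_integral_type :: "('k::field \<Rightarrow> 'h::ring_1 \<Rightarrow> 'h) \<Rightarrow> ('h \<Rightarrow> ('h \<times> 'h) list) \<Rightarrow> 'h \<Rightarrow> 'h \<Rightarrow> bool" where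
  "rel_integral_type sc \<Delta> \<Lambda> \<Lambda>t \<longleftrightarrow> \<Lambda>t \<noteq> 0 \<and> teq2 sc (tmul (\<Delta> \<Lambda>t) [(1, \<Lambda>t)]) [(\<Lambda>, \<Lambda>t)]"

definition non_degenerate :: "('k::field \<Rightarrow> 'h::ring_1 \<Rightarrow> 'h) \<Rightarrow> ('h \<Rightarrow> ('h \<times> 'h) list) \<Rightarrow> 'h \<Rightarrow> bool" where
  "non_degenerate sc \<Delta> \<Lambda>t \<longleftrightarrow> 1 \<in> Vr sc \<Delta> \<Lambda>t"

definition Aset :: "('k::field \<Rightarrow> 'h::ring_1 \<Rightarrow> 'h) \<Rightarrow> ('h \<Rightarrow> ('h \<times> 'h) list) \<Rightarrow> 'h \<Rightarrow> 'h set" where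
  "Aset sc \<Delta> \<Lambda>t = {a. \<exists>b. teq2 sc (tmul (\<Delta> a) [(1, \<Lambda>t)]) [(b, \<Lambda>t)]}"

definition piA :: "('k::field \<Rightarrow> 'h::ring_1 \<Rightarrow> 'h) \<Rightarrow> ('h \<Rightarrow> ('h \<times> 'h) list) \<Rightarrow> 'h \<Rightarrow> 'h \<Rightarrow> 'h" where
  "piA sc \<Delta> \<Lambda>t a = (THE b. teq2 sc (tmul (\<Delta> a) [(1, \<Lambda>t)]) [(b, \<Lambda>t)])"

text \<open>The linear dual V' of a subspace V, represented extensionally (functions vanishing off V).\<close>
definition dual_on :: "('k::field \<Rightarrow> 'h::ring_1 \<Rightarrow> 'h) \<Rightarrow> 'h set \<Rightarrow> ('h \<Rightarrow> 'k) set" where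
  "dual_on sc V = {\<nu>. (\<forall>x\<in>V. \<forall>y\<in>V. \<nu> (x + y) = \<nu> x + \<nu> y) \<and>
                      (\<forall>c. \<forall>x\<in>V. \<nu> (sc c x) = c * \<nu> x) \<and> (\<forall>x. x \<notin> V \<longrightarrow> \<nu> x = 0)}"

definition dual_act :: "'h set \<Rightarrow> ('h::ring_1 \<Rightarrow> 'k::field) \<Rightarrow> 'h \<Rightarrow> 'h \<Rightarrow> 'k" where
  "dual_act V \<nu> a = (\<lambda>v. if v \<in> V then \<nu> (a * v) else 0)"

text \<open>U(nu) = (id \<otimes> nu) Delta(Lambda~), computed with any linear extension of nu to H
  (the value does not depend on the extension since Delta(Lambda~) lies in H \<otimes> V_Lambda~).\<close>
definition Umap :: "('k::field \<Rightarrow> 'h::ring_1 \<Rightarrow> 'h) \<Rightarrow> ('h \<Rightarrow> ('h \<times> 'h) list) \<Rightarrow> 'h \<Rightarrow> ('h \<Rightarrow> 'k) \<Rightarrow> 'h" where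
  "Umap sc \<Delta> \<Lambda>t \<nu> =
     (let \<nu>' = (SOME \<nu>'. lin_fun sc \<nu>' \<and> (\<forall>v\<in>Vr sc \<Delta> \<Lambda>t. \<nu>' v = \<nu> v))
      in (\<Sum>(a,b)\<leftarrow>\<Delta> \<Lambda>t. sc (\<nu>' b) a))"

end

theory Submission
  imports Defs
begin


lemma add_sum_list:
  assumes "\<And>x y. f (x + y) = f x + f y" "f 0 = 0"
  shows "f (\<Sum>x\<leftarrow>xs. g x) = (\<Sum>x\<leftarrow>xs. f (g x))"
  by (induction xs) (auto simp: assms)

lemma sum_list_swap:
  fixes f :: "'a \<Rightarrow> 'b \<Rightarrow> 'c::comm_monoid_add"
  shows "(\<Sum>x\<leftarrow>xs. \<Sum>y\<leftarrow>ys. f x y) = (\<Sum>y\<leftarrow>ys. \<Sum>x\<leftarrow>xs. f x y)"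
  by (induction xs) (auto simp: sum_list_addf)

lemma sum_list_sum_swap:
  fixes f :: "'a \<Rightarrow> 'b \<Rightarrow> 'c::comm_monoid_add"
  shows "(\<Sum>x\<leftarrow>xs. \<Sum>y\<in>E. f x y) = (\<Sum>y\<in>E. \<Sum>x\<leftarrow>xs. f x y)"
  by (induction xs) (auto simp: sum.distrib)

lemma sum_list_concat_map:
  "(\<Sum>x\<leftarrow>concat (map g xs). f x) = (\<Sum>y\<leftarrow>xs. \<Sum>x\<leftarrow>g y. f x)"
  by (induction xs) auto

lemma tmul_single_r: "tmul t [(c,d)] = map (\<lambda>(a,b). (a*c, b*d)) t"
  unfolding tmul_def by (induction t) auto

lemma tmul_single_l: "tmul [(c,d)] t = map (\<lambda>(a,b). (c*a, d*b)) t"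
  unfolding tmul_def by (auto simp: case_prod_unfold)

locale hopf_ctx =
  fixes sc :: "'k::field \<Rightarrow> 'h::ring_1 \<Rightarrow> 'h"
    and \<Delta> :: "'h \<Rightarrow> ('h \<times> 'h) list" and \<epsilon> :: "'h \<Rightarrow> 'k" and S :: "'h \<Rightarrow> 'h"
  assumes hopf: "hopf_algebra sc \<Delta> \<epsilon> S"
begin

lemma VS: "vector_space sc" using hopf unfolding hopf_algebra_def by blast

sublocale vector_space sc by (rule VS)

lemma VK: "vector_space ((*) :: 'k \<Rightarrow> 'k \<Rightarrow> 'k)"
  by unfold_locales (auto simp: algebra_simps)

abbreviation lin :: "('h \<Rightarrow> 'k) \<Rightarrow> bool" where "lin \<equiv> lin_fun sc"
abbreviation linH :: "('h \<Rightarrow> 'h) \<Rightarrow> bool" where "linH \<equiv> Vector_Spaces.linear sc sc"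

lemma lin_iff: "lin f \<longleftrightarrow> (\<forall>x y. f (x + y) = f x + f y) \<and> (\<forall>c x. f (sc c x) = c * f x)"
  unfolding lin_fun_def linear_iff using VS VK by auto

lemma linH_iff: "linH f \<longleftrightarrow> (\<forall>x y. f (x + y) = f x + f y) \<and> (\<forall>c x. f (sc c x) = sc c (f x))"
  unfolding linear_iff using VS by auto

lemma linI: "(\<And>x y. f (x + y) = f x + f y) \<Longrightarrow> (\<And>c x. f (sc c x) = c * f x) \<Longrightarrow> lin f"
  by (simp add: lin_iff)

lemma linHI: "(\<And>x y. f (x + y) = f x + f y) \<Longrightarrow> (\<And>c x. f (sc c x) = sc c (f x)) \<Longrightarrow> linH f"
  by (simp add: linH_iff)

lemma lin_add: "lin f \<Longrightarrow> f (x + y) = f x + f y" by (simp add: lin_iff)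
lemma lin_scale: "lin f \<Longrightarrow> f (sc c x) = c * f x" by (simp add: lin_iff)
lemma lin_zero: "lin f \<Longrightarrow> f 0 = 0" using lin_scale[of f 0 0] by simp
lemma lin_sum_list: "lin f \<Longrightarrow> f (\<Sum>x\<leftarrow>xs. g x) = (\<Sum>x\<leftarrow>xs. f (g x))"
  by (rule add_sum_list) (auto simp: lin_add lin_zero)
lemma lin_sum: "lin f \<Longrightarrow> f (\<Sum>x\<in>E. g x) = (\<Sum>x\<in>E. f (g x))"
  by (induction E rule: infinite_finite_induct) (auto simp: lin_add lin_zero)
lemma lin_neg: "lin f \<Longrightarrow> f (- x) = - f x" using lin_add[of f x "-x"] lin_zero[of f] by (metis add_eq_0_iff2 minus_minus add.right_inverse)
lemma lin_diff: "lin f \<Longrightarrow> f (x - y) = f x - f y" using lin_add[of f x "-y"] lin_neg by simp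

lemma linH_add: "linH f \<Longrightarrow> f (x + y) = f x + f y" by (simp add: linH_iff)
lemma linH_scale: "linH f \<Longrightarrow> f (sc c x) = sc c (f x)" by (simp add: linH_iff)
lemma linH_zero: "linH f \<Longrightarrow> f 0 = 0" using linH_scale[of f 0 0] by simp
lemma linH_sum_list: "linH f \<Longrightarrow> f (\<Sum>x\<leftarrow>xs. g x) = (\<Sum>x\<leftarrow>xs. f (g x))"
  by (rule add_sum_list) (auto simp: linH_add linH_zero)

lemma sc_mult_l: "sc c (x * y) = sc c x * y" using hopf unfolding hopf_algebra_def by blast
lemma sc_mult_r: "sc c (x * y) = x * sc c y" using hopf unfolding hopf_algebra_def by blast

lemma lin_comp: "lin f \<Longrightarrow> linH g \<Longrightarrow> lin (\<lambda>x. f (g x))"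
  by (simp add: lin_iff linH_iff)
lemma linH_mult_l: "linH (\<lambda>x. a * x)"
  by (rule linHI) (auto simp: distrib_left sc_mult_r)
lemma linH_mult_r: "linH (\<lambda>x. x * a)"
  by (rule linHI) (auto simp: distrib_right sc_mult_l)
lemma linH_S: "linH S" using hopf unfolding hopf_algebra_def by blast
lemma linH_comp: "linH f \<Longrightarrow> linH g \<Longrightarrow> linH (\<lambda>x. f (g x))"
  by (simp add: linH_iff)
lemma lin_mult_const: "lin f \<Longrightarrow> lin (\<lambda>x. f x * c)"
  by (simp add: lin_iff algebra_simps)
lemma lin_const_mult: "lin f \<Longrightarrow> lin (\<lambda>x. c * f x)"
  by (simp add: lin_iff algebra_simps)
lemma lin_sum_listI: "(\<And>i. i \<in> set xs \<Longrightarrow> lin (f i)) \<Longrightarrow> lin (\<lambda>x. \<Sum>i\<leftarrow>xs. f i x)"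
proof (induction xs)
  case Nil then show ?case by (simp add: lin_iff)
next
  case (Cons a xs) then show ?case by (auto simp: lin_iff algebra_simps sum_list_addf sum_list_const_mult)
qed
lemma lin_sumI: "(\<And>i. i \<in> E \<Longrightarrow> lin (f i)) \<Longrightarrow> lin (\<lambda>x. \<Sum>i\<in>E. f i x)"
  by (simp add: lin_iff sum.distrib sum_distrib_left)
lemma lin_0: "lin (\<lambda>x. 0)" by (simp add: lin_iff)

definition BB where "BB = extend_basis {}"
lemma BB: "independent BB" "span BB = UNIV"
  unfolding BB_def using independent_extend_basis[OF independent_empty] span_extend_basis[OF independent_empty] by auto

definition rep where "rep v b = representation BB v b"

lemma lin_rep: "lin (\<lambda>v. rep v b)"
  unfolding lin_fun_def rep_def by (rule linear_representation[OF BB])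

lemma rep_finite: "finite {b. rep v b \<noteq> 0}"
  unfolding rep_def by (rule finite_representation)

lemma rep_expand:
  assumes "finite E" "{b. rep v b \<noteq> 0} \<subseteq> E"
  shows "(\<Sum>b\<in>E. sc (rep v b) b) = v"
proof -
  have "(\<Sum>b\<in>E. sc (rep v b) b) = (\<Sum>b | rep v b \<noteq> 0. sc (rep v b) b)"
    by (rule sum.mono_neutral_right) (use assms in auto)
  also have "\<dots> = v" unfolding rep_def using BB by (intro sum_nonzero_representation_eq) auto
  finally show ?thesis .
qed

lemma sep: assumes "\<And>f. lin f \<Longrightarrow> f x = f y" shows "x = y"
proof (rule ccontr)
  assume "x \<noteq> y"
  hence "x - y \<noteq> 0" by simp
  obtain b where b: "rep (x - y) b \<noteq> 0"
  proof (rule ccontr)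
    assume "\<not> thesis"
    hence "\<forall>b. rep (x-y) b = 0" using that by blast
    hence "x - y = (\<Sum>b\<in>{}. sc (rep (x-y) b) b)" using rep_expand[of "{}" "x-y"] by simp
    thus False using \<open>x - y \<noteq> 0\<close> by simp
  qed
  have "rep (x - y) b = rep x b - rep y b" using lin_diff[OF lin_rep] by blast
  also have "\<dots> = 0" using assms[OF lin_rep[of b]] by simp
  finally show False using b by simp
qed

lemma exists_fun_one: assumes "x \<noteq> 0" obtains f where "lin f" "f x = 1"
proof -
  have "\<not> (\<forall>f. lin f \<longrightarrow> f x = f 0)" using sep[of x 0] assms by blast
  then obtain g where g: "lin g" "g x \<noteq> 0"
    using lin_zero by force
  show ?thesis using that[of "\<lambda>v. g v / g x"] g
    by (simp add: lin_iff add_divide_distrib)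
qed

lemma expand_finite:
  assumes "finite X"
  obtains E where "finite E" "\<And>x. x \<in> X \<Longrightarrow> x = (\<Sum>e\<in>E. sc (rep x e) e)"
proof -
  define E where "E = (\<Union>x\<in>X. {b. rep x b \<noteq> 0})"
  have "finite E" unfolding E_def using assms rep_finite by auto
  moreover have "x = (\<Sum>e\<in>E. sc (rep x e) e)" if "x \<in> X" for x
    using rep_expand[of E x, symmetric] \<open>finite E\<close> that unfolding E_def by auto
  ultimately show ?thesis using that by blast
qed

definition bil :: "('h \<Rightarrow> 'h \<Rightarrow> 'k) \<Rightarrow> bool" where
  "bil F \<longleftrightarrow> (\<forall>y. lin (\<lambda>x. F x y)) \<and> (\<forall>x. lin (\<lambda>y. F x y))"

definition tril :: "('h \<Rightarrow> 'h \<Rightarrow> 'h \<Rightarrow> 'k) \<Rightarrow> bool" where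
  "tril G \<longleftrightarrow> (\<forall>y z. lin (\<lambda>x. G x y z)) \<and> (\<forall>x z. lin (\<lambda>y. G x y z)) \<and> (\<forall>x y. lin (\<lambda>z. G x y z))"

lemma lin_expand: assumes "lin f" "x = (\<Sum>e\<in>E. sc (rep x e) e)"
  shows "f x = (\<Sum>e\<in>E. rep x e * f e)"
  by (subst assms(2)) (simp add: lin_sum[OF assms(1)] lin_scale[OF assms(1)])

lemma BIL:
  assumes t: "teq2 sc t u" and F: "bil F"
  shows "(\<Sum>(x,y)\<leftarrow>t. F x y) = (\<Sum>(x,y)\<leftarrow>u. F x y)"
proof -
  obtain E where E: "finite E" "\<And>x. x \<in> fst ` set (t @ u) \<Longrightarrow> x = (\<Sum>e\<in>E. sc (rep x e) e)"
    using expand_finite[of "fst ` set (t @ u)"] by blast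
  have key: "(\<Sum>(x,y)\<leftarrow>l. F x y) = (\<Sum>e\<in>E. \<Sum>(x,y)\<leftarrow>l. rep x e * F e y)"
    if "set l \<subseteq> set (t @ u)" for l
  proof -
    have "(\<Sum>(x,y)\<leftarrow>l. F x y) = (\<Sum>(x,y)\<leftarrow>l. \<Sum>e\<in>E. rep x e * F e y)"
    proof (rule arg_cong[where f = sum_list], rule map_cong[OF refl])
      fix p assume p: "p \<in> set l"
      obtain x y where [simp]: "p = (x,y)" by (cases p)
      have "x \<in> fst ` set (t @ u)" using p that by force
      then show "(case p of (x, y) \<Rightarrow> F x y) = (case p of (x, y) \<Rightarrow> \<Sum>e\<in>E. rep x e * F e y)"
        using lin_expand[of "\<lambda>x. F x y" x E] F E(2) unfolding bil_def by simp
    qed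
    also have "\<dots> = (\<Sum>e\<in>E. \<Sum>(x,y)\<leftarrow>l. rep x e * F e y)"
      using sum_list_sum_swap[where f="\<lambda>p e. case p of (x,y) \<Rightarrow> rep x e * F e y" and xs=l and E=E]
      by (simp add: case_prod_unfold)
    finally show ?thesis .
  qed
  have "(\<Sum>(x,y)\<leftarrow>t. rep x e * F e y) = (\<Sum>(x,y)\<leftarrow>u. rep x e * F e y)" for e
    using t lin_rep[of e] F unfolding teq2_def bil_def by blast
  then show ?thesis using key[where l=t] key[where l=u] by simp
qed

end

context hopf_ctx begin

lemma bilI: "(\<And>y. lin (\<lambda>x. F x y)) \<Longrightarrow> (\<And>x. lin (\<lambda>y. F x y)) \<Longrightarrow> bil F"
  by (simp add: bil_def)
lemma bil_prod: "lin f \<Longrightarrow> lin g \<Longrightarrow> bil (\<lambda>x y. f x * g y)"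
  by (intro bilI lin_mult_const lin_const_mult)
lemma trilI: "(\<And>y z. lin (\<lambda>x. G x y z)) \<Longrightarrow> (\<And>x z. lin (\<lambda>y. G x y z)) \<Longrightarrow> (\<And>x y. lin (\<lambda>z. G x y z)) \<Longrightarrow> tril G"
  by (simp add: tril_def)
lemma bil_l: "bil F \<Longrightarrow> lin (\<lambda>x. F x y)" by (simp add: bil_def)
lemma bil_r: "bil F \<Longrightarrow> lin (\<lambda>y. F x y)" by (simp add: bil_def)

lemma TRIL:
  assumes t: "teq3 sc t u" and G: "tril G"
  shows "(\<Sum>(x,y,z)\<leftarrow>t. G x y z) = (\<Sum>(x,y,z)\<leftarrow>u. G x y z)"
proof -
  let ?X = "fst ` set (t @ u) \<union> (fst \<circ> snd) ` set (t @ u)"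
  obtain E where E: "finite E" "\<And>x. x \<in> ?X \<Longrightarrow> x = (\<Sum>e\<in>E. sc (rep x e) e)"
    using expand_finite[of ?X] by blast
  have key: "(\<Sum>(x,y,z)\<leftarrow>l. G x y z) = (\<Sum>e\<in>E. \<Sum>f\<in>E. \<Sum>(x,y,z)\<leftarrow>l. rep x e * rep y f * G e f z)"
    if "set l \<subseteq> set (t @ u)" for l
  proof -
    have "(\<Sum>(x,y,z)\<leftarrow>l. G x y z) = (\<Sum>(x,y,z)\<leftarrow>l. \<Sum>e\<in>E. \<Sum>f\<in>E. rep x e * rep y f * G e f z)"
    proof (rule arg_cong[where f = sum_list], rule map_cong[OF refl])
      fix p assume p: "p \<in> set l"
      obtain x y z where [simp]: "p = (x,y,z)" by (cases p)
      have x: "x \<in> ?X" using p that by force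
      have y: "y \<in> ?X" using p that by force
      have "G x y z = (\<Sum>e\<in>E. rep x e * G e y z)"
        using lin_expand[of "\<lambda>x. G x y z" x E] G E(2)[OF x] unfolding tril_def by simp
      also have "\<dots> = (\<Sum>e\<in>E. rep x e * (\<Sum>f\<in>E. rep y f * G e f z))"
        using lin_expand[of "\<lambda>y. G _ y z" y E] G E(2)[OF y] unfolding tril_def by simp
      also have "\<dots> = (\<Sum>e\<in>E. \<Sum>f\<in>E. rep x e * rep y f * G e f z)"
        by (simp add: sum_distrib_left mult.assoc)
      finally show "(case p of (x, y, z) \<Rightarrow> G x y z) = (case p of (x, y, z) \<Rightarrow> \<Sum>e\<in>E. \<Sum>f\<in>E. rep x e * rep y f * G e f z)"
        by simp
    qed
    also have "\<dots> = (\<Sum>e\<in>E. \<Sum>(x,y,z)\<leftarrow>l. \<Sum>f\<in>E. rep x e * rep y f * G e f z)"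
      using sum_list_sum_swap[where f="\<lambda>p e. case p of (x,y,z) \<Rightarrow> \<Sum>f\<in>E. rep x e * rep y f * G e f z" and xs=l and E=E]
      by (simp add: case_prod_unfold)
    also have "\<dots> = (\<Sum>e\<in>E. \<Sum>f\<in>E. \<Sum>(x,y,z)\<leftarrow>l. rep x e * rep y f * G e f z)"
      by (rule sum.cong[OF refl])
         (use sum_list_sum_swap[where f="\<lambda>p f. case p of (x,y,z) \<Rightarrow> rep x _ * rep y f * G _ f z" and xs=l and E=E]
          in \<open>simp add: case_prod_unfold\<close>)
    finally show ?thesis .
  qed
  have "(\<Sum>(x,y,z)\<leftarrow>t. rep x e * rep y f * G e f z) = (\<Sum>(x,y,z)\<leftarrow>u. rep x e * rep y f * G e f z)" for e f
    using t lin_rep[of e] lin_rep[of f] G unfolding teq3_def tril_def by blast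
  then show ?thesis using key[where l=t] key[where l=u] by simp
qed

lemma hopf_facts:
  "\<And>x y. teq2 sc (\<Delta> (x + y)) (\<Delta> x @ \<Delta> y)"
  "\<And>c x. teq2 sc (\<Delta> (sc c x)) (map (\<lambda>(a,b). (sc c a, b)) (\<Delta> x))"
  "\<And>x y. teq2 sc (\<Delta> (x * y)) (tmul (\<Delta> x) (\<Delta> y))"
  "teq2 sc (\<Delta> 1) [(1,1)]"
  "\<And>x. teq3 sc (concat (map (\<lambda>(a,b). map (\<lambda>(p,q). (p,q,b)) (\<Delta> a)) (\<Delta> x)))
                   (concat (map (\<lambda>(a,b). map (\<lambda>(p,q). (a,p,q)) (\<Delta> b)) (\<Delta> x)))"
  "lin \<epsilon>" "\<And>x y. \<epsilon> (x * y) = \<epsilon> x * \<epsilon> y" "\<epsilon> 1 = 1"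
  "\<And>x. (\<Sum>(a,b)\<leftarrow>\<Delta> x. sc (\<epsilon> a) b) = x"
  "\<And>x. (\<Sum>(a,b)\<leftarrow>\<Delta> x. sc (\<epsilon> b) a) = x"
  "\<And>x. (\<Sum>(a,b)\<leftarrow>\<Delta> x. S a * b) = sc (\<epsilon> x) 1"
  "\<And>x. (\<Sum>(a,b)\<leftarrow>\<Delta> x. a * S b) = sc (\<epsilon> x) 1"
  "bij S"
  using hopf unfolding hopf_algebra_def by blast+

lemmas counit_l = hopf_facts(9) and counit_r = hopf_facts(10)
  and antip_l = hopf_facts(11) and antip_r = hopf_facts(12) and S_bij = hopf_facts(13)
  and lin_eps = hopf_facts(6)

lemma Delta_lin: assumes "bil F" shows "lin (\<lambda>x. \<Sum>(a,b)\<leftarrow>\<Delta> x. F a b)"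
proof (rule linI)
  fix x y
  show "(\<Sum>(a,b)\<leftarrow>\<Delta> (x + y). F a b) = (\<Sum>(a,b)\<leftarrow>\<Delta> x. F a b) + (\<Sum>(a,b)\<leftarrow>\<Delta> y. F a b)"
    using BIL[OF hopf_facts(1) assms, of x y] by simp
next
  fix c x
  have "(\<Sum>(a,b)\<leftarrow>\<Delta> (sc c x). F a b) = (\<Sum>(a,b)\<leftarrow>map (\<lambda>(a,b). (sc c a, b)) (\<Delta> x). F a b)"
    using BIL[OF hopf_facts(2) assms, of c x] by simp
  also have "\<dots> = (\<Sum>(a,b)\<leftarrow>\<Delta> x. c * F a b)"
    using lin_scale[OF bil_l[OF assms]] by (simp add: case_prod_unfold o_def)
  also have "\<dots> = c * (\<Sum>(a,b)\<leftarrow>\<Delta> x. F a b)"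
    by (simp add: sum_list_const_mult[symmetric] case_prod_unfold)
  finally show "(\<Sum>(a,b)\<leftarrow>\<Delta> (sc c x). F a b) = c * (\<Sum>(a,b)\<leftarrow>\<Delta> x. F a b)" .
qed

lemma Delta_mult: assumes "bil F"
  shows "(\<Sum>(a,b)\<leftarrow>\<Delta> (x * y). F a b) = (\<Sum>(a,b)\<leftarrow>\<Delta> x. \<Sum>(c,d)\<leftarrow>\<Delta> y. F (a*c) (b*d))"
  using BIL[OF hopf_facts(3) assms, of x y]
  by (simp add: tmul_def sum_list_concat_map case_prod_unfold o_def)

lemma Delta_one: assumes "bil F" shows "(\<Sum>(a,b)\<leftarrow>\<Delta> 1. F a b) = F 1 1"
  using BIL[OF hopf_facts(4) assms] by simp

lemma coassoc: assumes "tril G"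
  shows "(\<Sum>(a,b)\<leftarrow>\<Delta> x. \<Sum>(p,q)\<leftarrow>\<Delta> a. G p q b) = (\<Sum>(a,b)\<leftarrow>\<Delta> x. \<Sum>(p,q)\<leftarrow>\<Delta> b. G a p q)"
  using TRIL[OF hopf_facts(5) assms, of x]
  by (simp add: sum_list_concat_map case_prod_unfold o_def)

end


locale int_ctx = hopf_ctx sc \<Delta> \<epsilon> S for sc :: "'k::field \<Rightarrow> 'h::ring_1 \<Rightarrow> 'h" and \<Delta> \<epsilon> S +
  fixes \<Lambda> \<Lambda>t :: 'h
  assumes int: "integral_type sc \<Delta> \<Lambda>"
    and relint: "rel_integral_type sc \<Delta> \<Lambda> \<Lambda>t"
begin

abbreviation "A \<equiv> Aset sc \<Delta> \<Lambda>t"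
abbreviation "\<pi> \<equiv> piA sc \<Delta> \<Lambda>t"
abbreviation "V \<equiv> Vr sc \<Delta> \<Lambda>t"
abbreviation "W \<equiv> Vl sc \<Delta> \<Lambda>t"
abbreviation "T \<equiv> \<Delta> \<Lambda>t"

lemma Lt_nz: "\<Lambda>t \<noteq> 0" using relint unfolding rel_integral_type_def by blast

lemma relint_sc: assumes "bil F" shows "(\<Sum>(p,q)\<leftarrow>T. F p (q*\<Lambda>t)) = F \<Lambda> \<Lambda>t"
proof -
  have "teq2 sc (map (\<lambda>(a,b). (a*1, b*\<Lambda>t)) T) [(\<Lambda>, \<Lambda>t)]"
    using relint unfolding rel_integral_type_def tmul_single_r by blast
  from BIL[OF this assms] show ?thesis by (simp add: case_prod_unfold o_def)
qed

lemma teq2_sym: "teq2 sc t u \<Longrightarrow> teq2 sc u t" unfolding teq2_def by simp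
lemma teq2_trans: "teq2 sc t u \<Longrightarrow> teq2 sc u v \<Longrightarrow> teq2 sc t v" unfolding teq2_def by simp

lemma teq_uniq: assumes "teq2 sc [(b,\<Lambda>t)] [(b',\<Lambda>t)]" shows "b = b'"
proof -
  obtain g where g: "lin g" "g \<Lambda>t = 1" using exists_fun_one[OF Lt_nz] by blast
  show ?thesis
  proof (rule sep)
    fix f assume "lin f"
    then show "f b = f b'" using assms g unfolding teq2_def by force
  qed
qed

lemma A_pi: assumes "a \<in> A" shows "teq2 sc (tmul (\<Delta> a) [(1, \<Lambda>t)]) [(\<pi> a, \<Lambda>t)]"
proof -
  obtain b where b: "teq2 sc (tmul (\<Delta> a) [(1, \<Lambda>t)]) [(b, \<Lambda>t)]" using assms unfolding Aset_def by blast
  have "teq2 sc (tmul (\<Delta> a) [(1, \<Lambda>t)]) [(b', \<Lambda>t)] \<Longrightarrow> b' = b" for b'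
    using b teq_uniq teq2_sym teq2_trans by blast
  then have "\<pi> a = b" unfolding piA_def using b by (rule the_equality[rotated])
  then show ?thesis using b by simp
qed

lemma A_sc: assumes "a \<in> A" "bil F" shows "(\<Sum>(x,y)\<leftarrow>\<Delta> a. F x (y*\<Lambda>t)) = F (\<pi> a) \<Lambda>t"
  using BIL[OF A_pi[OF assms(1)] assms(2)] unfolding tmul_single_r by (simp add: case_prod_unfold o_def)

lemma A_I: assumes "\<And>\<phi> \<psi>. lin \<phi> \<Longrightarrow> lin \<psi> \<Longrightarrow> (\<Sum>(x,y)\<leftarrow>\<Delta> a. \<phi> x * \<psi> (y*\<Lambda>t)) = \<phi> b * \<psi> \<Lambda>t"
  shows "a \<in> A" "\<pi> a = b"
proof -
  have t: "teq2 sc (tmul (\<Delta> a) [(1, \<Lambda>t)]) [(b, \<Lambda>t)]"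
    unfolding teq2_def tmul_single_r using assms by (simp add: case_prod_unfold o_def)
  then show "a \<in> A" unfolding Aset_def by blast
  then show "\<pi> a = b" using A_pi t teq_uniq teq2_sym teq2_trans by blast
qed

end

context int_ctx begin

lemma lin_ml: "lin \<phi> \<Longrightarrow> lin (\<lambda>x. \<phi> (a * x))" using lin_comp linH_mult_l by blast
lemma lin_mr: "lin \<phi> \<Longrightarrow> lin (\<lambda>x. \<phi> (x * a))" using lin_comp linH_mult_r by blast
lemma lin_S: "lin \<phi> \<Longrightarrow> lin (\<lambda>x. \<phi> (S x))" using lin_comp linH_S by blast

lemma one_A: "1 \<in> A" "\<pi> 1 = 1"
proof -
  have *: "(\<Sum>(x,y)\<leftarrow>\<Delta> 1. \<phi> x * \<psi> (y*\<Lambda>t)) = \<phi> 1 * \<psi> \<Lambda>t" if "lin \<phi>" "lin \<psi>" for \<phi> \<psi>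
    using Delta_one[OF bil_prod[OF that(1) lin_mr[OF that(2)]]] by simp
  show "1 \<in> A" "\<pi> 1 = 1"
    by (rule A_I(1)[OF *], assumption+) (rule A_I(2)[OF *], assumption+)
qed

lemma add_A: assumes "a \<in> A" "b \<in> A" shows "a + b \<in> A" "\<pi> (a + b) = \<pi> a + \<pi> b"
proof -
  have *: "(\<Sum>(x,y)\<leftarrow>\<Delta> (a+b). \<phi> x * \<psi> (y*\<Lambda>t)) = \<phi> (\<pi> a + \<pi> b) * \<psi> \<Lambda>t" if "lin \<phi>" "lin \<psi>" for \<phi> \<psi>
  proof -
    have B: "bil (\<lambda>x y. \<phi> x * \<psi> (y*\<Lambda>t))" by (rule bil_prod[OF that(1) lin_mr[OF that(2)]])
    have B2: "bil (\<lambda>x y. \<phi> x * \<psi> y)" by (rule bil_prod[OF that])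
    have "(\<Sum>(x,y)\<leftarrow>\<Delta> (a+b). \<phi> x * \<psi> (y*\<Lambda>t)) = (\<Sum>(x,y)\<leftarrow>\<Delta> a. \<phi> x * \<psi> (y*\<Lambda>t)) + (\<Sum>(x,y)\<leftarrow>\<Delta> b. \<phi> x * \<psi> (y*\<Lambda>t))"
      using lin_add[OF Delta_lin[OF B], of a b] by simp
    also have "\<dots> = \<phi> (\<pi> a) * \<psi> \<Lambda>t + \<phi> (\<pi> b) * \<psi> \<Lambda>t"
      using A_sc[OF assms(1) B2] A_sc[OF assms(2) B2] by simp
    also have "\<dots> = \<phi> (\<pi> a + \<pi> b) * \<psi> \<Lambda>t" using lin_add[OF that(1)] by (simp add: distrib_right)
    finally show ?thesis .
  qed
  show "a + b \<in> A" "\<pi> (a + b) = \<pi> a + \<pi> b"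
    by (rule A_I(1)[OF *], assumption+) (rule A_I(2)[OF *], assumption+)
qed

lemma scale_A: assumes "a \<in> A" shows "sc c a \<in> A" "\<pi> (sc c a) = sc c (\<pi> a)"
proof -
  have *: "(\<Sum>(x,y)\<leftarrow>\<Delta> (sc c a). \<phi> x * \<psi> (y*\<Lambda>t)) = \<phi> (sc c (\<pi> a)) * \<psi> \<Lambda>t" if "lin \<phi>" "lin \<psi>" for \<phi> \<psi>
  proof -
    have B: "bil (\<lambda>x y. \<phi> x * \<psi> (y*\<Lambda>t))" by (rule bil_prod[OF that(1) lin_mr[OF that(2)]])
    have B2: "bil (\<lambda>x y. \<phi> x * \<psi> y)" by (rule bil_prod[OF that])
    have "(\<Sum>(x,y)\<leftarrow>\<Delta> (sc c a). \<phi> x * \<psi> (y*\<Lambda>t)) = c * (\<Sum>(x,y)\<leftarrow>\<Delta> a. \<phi> x * \<psi> (y*\<Lambda>t))"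
      using lin_scale[OF Delta_lin[OF B], of c a] by simp
    also have "\<dots> = c * (\<phi> (\<pi> a) * \<psi> \<Lambda>t)"
      using A_sc[OF assms(1) B2] by simp
    also have "\<dots> = \<phi> (sc c (\<pi> a)) * \<psi> \<Lambda>t" using lin_scale[OF that(1)] by (simp add: mult.assoc)
    finally show ?thesis .
  qed
  show "sc c a \<in> A" "\<pi> (sc c a) = sc c (\<pi> a)"
    by (rule A_I(1)[OF *], assumption+) (rule A_I(2)[OF *], assumption+)
qed

lemma mult_A: assumes "a \<in> A" "b \<in> A" shows "a * b \<in> A" "\<pi> (a * b) = \<pi> a * \<pi> b"
proof -
  have *: "(\<Sum>(x,y)\<leftarrow>\<Delta> (a*b). \<phi> x * \<psi> (y*\<Lambda>t)) = \<phi> (\<pi> a * \<pi> b) * \<psi> \<Lambda>t" if "lin \<phi>" "lin \<psi>" for \<phi> \<psi>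
  proof -
    have B: "bil (\<lambda>x y. \<phi> x * \<psi> (y*\<Lambda>t))" by (rule bil_prod[OF that(1) lin_mr[OF that(2)]])
    have "(\<Sum>(x,y)\<leftarrow>\<Delta> (a*b). \<phi> x * \<psi> (y*\<Lambda>t))
        = (\<Sum>(x1,y1)\<leftarrow>\<Delta> a. \<Sum>(x2,y2)\<leftarrow>\<Delta> b. \<phi> (x1*x2) * \<psi> (y1*y2*\<Lambda>t))"
      using Delta_mult[OF B] by simp
    also have "\<dots> = (\<Sum>(x1,y1)\<leftarrow>\<Delta> a. \<phi> (x1 * \<pi> b) * \<psi> (y1*\<Lambda>t))"
    proof (rule arg_cong[where f=sum_list], rule map_cong[OF refl], clarify)
      fix x1 y1
      have B1: "bil (\<lambda>u w. \<phi> (x1*u) * \<psi> (y1*w))" by (rule bil_prod[OF lin_ml[OF that(1)] lin_ml[OF that(2)]])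
      show "(\<Sum>(x2,y2)\<leftarrow>\<Delta> b. \<phi> (x1*x2) * \<psi> (y1*y2*\<Lambda>t)) = \<phi> (x1 * \<pi> b) * \<psi> (y1*\<Lambda>t)"
        using A_sc[OF assms(2) B1] by (simp add: mult.assoc)
    qed
    also have "\<dots> = \<phi> (\<pi> a * \<pi> b) * \<psi> \<Lambda>t"
      using A_sc[OF assms(1) bil_prod[OF lin_mr[OF that(1)] that(2)]] by simp
    finally show ?thesis .
  qed
  show "a * b \<in> A" "\<pi> (a * b) = \<pi> a * \<pi> b"
    by (rule A_I(1)[OF *], assumption+) (rule A_I(2)[OF *], assumption+)
qed

end

context int_ctx begin

lemma lin_mult_r_sum: "lin \<phi> \<Longrightarrow> \<phi> ((\<Sum>i\<leftarrow>l. f i) * p) = (\<Sum>i\<leftarrow>l. \<phi> (f i * p))"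
  by (simp add: sum_list_mult_const[symmetric] lin_sum_list)

lemma M_sc:
  assumes a: "a \<in> A" and ph: "lin \<phi>" and ps: "lin \<psi>"
  shows "(\<Sum>(p,q)\<leftarrow>T. \<phi> p * \<psi> (a*q)) = (\<Sum>(p,q)\<leftarrow>T. \<phi> (S (\<pi> a) * p) * \<psi> q)"
proof -
  define F where "F x y = (\<Sum>(p,q)\<leftarrow>\<Delta> y. \<phi> (S x * p) * \<psi> q)" for x y
  define G where "G x y1 y2 = (\<Sum>(p,q)\<leftarrow>T. \<phi> (S x * (y1 * p)) * \<psi> (y2 * q))" for x y1 y2
  have bF: "bil F" unfolding F_def
  proof (rule bilI)
    fix y show "lin (\<lambda>x. \<Sum>(p,q)\<leftarrow>\<Delta> y. \<phi> (S x * p) * \<psi> q)"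
      unfolding case_prod_unfold
      by (rule lin_sum_listI, rule lin_mult_const, rule lin_S, rule lin_mr[OF ph])
  next
    fix x show "lin (\<lambda>y. \<Sum>(p,q)\<leftarrow>\<Delta> y. \<phi> (S x * p) * \<psi> q)"
      by (rule Delta_lin, rule bil_prod[OF lin_ml[OF ph] ps])
  qed
  have tG: "tril G" unfolding G_def case_prod_unfold
  proof (rule trilI)
    fix y z show "lin (\<lambda>x. \<Sum>pq\<leftarrow>T. \<phi> (S x * (y * fst pq)) * \<psi> (z * snd pq))"
      by (rule lin_sum_listI, rule lin_mult_const, rule lin_S, rule lin_mr[OF ph])
  next
    fix x z show "lin (\<lambda>y. \<Sum>pq\<leftarrow>T. \<phi> (S x * (y * fst pq)) * \<psi> (z * snd pq))"
      by (rule lin_sum_listI, rule lin_mult_const, rule lin_mr, rule lin_ml[OF ph])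
  next
    fix x y show "lin (\<lambda>z. \<Sum>pq\<leftarrow>T. \<phi> (S x * (y * fst pq)) * \<psi> (z * snd pq))"
      by (rule lin_sum_listI, rule lin_const_mult, rule lin_mr[OF ps])
  qed
  have step3: "F x (y*\<Lambda>t) = (\<Sum>(y1,y2)\<leftarrow>\<Delta> y. G x y1 y2)" for x y
    unfolding F_def G_def
    using Delta_mult[OF bil_prod[OF lin_ml[OF ph, where a="S x"] ps], where x=y and y="\<Lambda>t"] by simp
  have step5: "(\<Sum>(x1,x2)\<leftarrow>\<Delta> x. G x1 x2 y) = \<epsilon> x * (\<Sum>(p,q)\<leftarrow>T. \<phi> p * \<psi> (y*q))" for x y
  proof -
    have "(\<Sum>(x1,x2)\<leftarrow>\<Delta> x. G x1 x2 y) = (\<Sum>(p,q)\<leftarrow>T. \<Sum>(x1,x2)\<leftarrow>\<Delta> x. \<phi> (S x1 * x2 * p) * \<psi> (y * q))"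
      unfolding G_def using sum_list_swap[where xs="\<Delta> x" and ys=T and
           f="\<lambda>xx pq. \<phi> (S (fst xx) * (snd xx * fst pq)) * \<psi> (y * snd pq)"]
      by (simp add: case_prod_unfold mult.assoc)
    also have "\<dots> = (\<Sum>(p,q)\<leftarrow>T. \<phi> ((\<Sum>(x1,x2)\<leftarrow>\<Delta> x. S x1 * x2) * p) * \<psi> (y * q))"
      by (simp add: case_prod_unfold lin_mult_r_sum[OF ph] sum_list_mult_const)
    also have "\<dots> = (\<Sum>(p,q)\<leftarrow>T. \<epsilon> x * (\<phi> p * \<psi> (y * q)))"
      by (simp add: antip_l lin_scale[OF ph] sc_mult_l[symmetric] mult.assoc)
    also have "\<dots> = \<epsilon> x * (\<Sum>(p,q)\<leftarrow>T. \<phi> p * \<psi> (y*q))"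
      by (simp add: case_prod_unfold sum_list_const_mult)
    finally show ?thesis .
  qed
  have "(\<Sum>(p,q)\<leftarrow>T. \<phi> (S (\<pi> a) * p) * \<psi> q) = F (\<pi> a) \<Lambda>t" unfolding F_def ..
  also have "\<dots> = (\<Sum>(x,y)\<leftarrow>\<Delta> a. F x (y*\<Lambda>t))" using A_sc[OF a bF] by simp
  also have "\<dots> = (\<Sum>(x,y)\<leftarrow>\<Delta> a. \<Sum>(y1,y2)\<leftarrow>\<Delta> y. G x y1 y2)" by (simp add: step3)
  also have "\<dots> = (\<Sum>(x,y)\<leftarrow>\<Delta> a. \<Sum>(x1,x2)\<leftarrow>\<Delta> x. G x1 x2 y)" using coassoc[OF tG, of a] by simp
  also have "\<dots> = (\<Sum>(x,y)\<leftarrow>\<Delta> a. \<epsilon> x * (\<Sum>(p,q)\<leftarrow>T. \<phi> p * \<psi> (y*q)))" by (simp add: step5)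
  also have "\<dots> = (\<Sum>(p,q)\<leftarrow>T. \<Sum>(x,y)\<leftarrow>\<Delta> a. \<phi> p * \<psi> (sc (\<epsilon> x) y * q))"
    using sum_list_swap[where xs="\<Delta> a" and ys=T and
           f="\<lambda>xx pq. \<phi> (fst pq) * \<psi> (sc (\<epsilon> (fst xx)) (snd xx) * snd pq)"]
    by (simp add: case_prod_unfold sum_list_const_mult[symmetric] lin_scale[OF ps] sc_mult_l[symmetric] mult.left_commute)
  also have "\<dots> = (\<Sum>(p,q)\<leftarrow>T. \<phi> p * \<psi> ((\<Sum>(x,y)\<leftarrow>\<Delta> a. sc (\<epsilon> x) y) * q))"
    by (simp add: case_prod_unfold lin_mult_r_sum[OF ps] sum_list_const_mult)
  also have "\<dots> = (\<Sum>(p,q)\<leftarrow>T. \<phi> p * \<psi> (a*q))" by (simp add: counit_l)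
  finally show ?thesis by simp
qed

end

context int_ctx begin

lemma M_teq: assumes "a \<in> A" shows "teq2 sc (tmul [(1, a)] T) (tmul [(S (\<pi> a), 1)] T)"
  unfolding teq2_def tmul_single_l using M_sc[OF assms]
  by (simp add: case_prod_unfold o_def mult.commute)

lemma M_bil: assumes "a \<in> A" "bil F"
  shows "(\<Sum>(p,q)\<leftarrow>T. F p (a*q)) = (\<Sum>(p,q)\<leftarrow>T. F (S (\<pi> a) * p) q)"
  using BIL[OF M_teq[OF assms(1)] assms(2)] unfolding tmul_single_l
  by (simp add: case_prod_unfold o_def)

lemma M_W: assumes "a \<in> A" "lin \<nu>"
  shows "(\<Sum>(p,q)\<leftarrow>T. sc (\<nu> (a*q)) p) = S (\<pi> a) * (\<Sum>(p,q)\<leftarrow>T. sc (\<nu> q) p)"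
proof (rule sep)
  fix f assume f: "lin f"
  have "f (\<Sum>(p,q)\<leftarrow>T. sc (\<nu> (a*q)) p) = (\<Sum>(p,q)\<leftarrow>T. f p * \<nu> (a*q))"
    by (simp add: lin_sum_list[OF f] lin_scale[OF f] case_prod_unfold mult.commute)
  also have "\<dots> = (\<Sum>(p,q)\<leftarrow>T. f (S (\<pi> a) * p) * \<nu> q)" by (rule M_sc[OF assms(1) f assms(2)])
  also have "\<dots> = f (S (\<pi> a) * (\<Sum>(p,q)\<leftarrow>T. sc (\<nu> q) p))"
    by (simp add: sum_list_const_mult[symmetric] lin_sum_list[OF f] lin_scale[OF f] case_prod_unfold
         sc_mult_r[symmetric] mult.commute)
  finally show "f (\<Sum>(p,q)\<leftarrow>T. sc (\<nu> (a*q)) p) = f (S (\<pi> a) * (\<Sum>(p,q)\<leftarrow>T. sc (\<nu> q) p))" .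
qed

lemma M_V: assumes "a \<in> A" "lin \<nu>"
  shows "a * (\<Sum>(p,q)\<leftarrow>T. sc (\<nu> p) q) = (\<Sum>(p,q)\<leftarrow>T. sc (\<nu> (S (\<pi> a) * p)) q)"
proof (rule sep)
  fix f assume f: "lin f"
  have "f (a * (\<Sum>(p,q)\<leftarrow>T. sc (\<nu> p) q)) = (\<Sum>(p,q)\<leftarrow>T. \<nu> p * f (a*q))"
    by (simp add: sum_list_const_mult[symmetric] lin_sum_list[OF f] lin_scale[OF f] case_prod_unfold
         sc_mult_r[symmetric])
  also have "\<dots> = (\<Sum>(p,q)\<leftarrow>T. \<nu> (S (\<pi> a) * p) * f q)" by (rule M_sc[OF assms(1) assms(2) f])
  also have "\<dots> = f (\<Sum>(p,q)\<leftarrow>T. sc (\<nu> (S (\<pi> a) * p)) q)"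
    by (simp add: lin_sum_list[OF f] lin_scale[OF f] case_prod_unfold)
  finally show "f (a * (\<Sum>(p,q)\<leftarrow>T. sc (\<nu> p) q)) = f (\<Sum>(p,q)\<leftarrow>T. sc (\<nu> (S (\<pi> a) * p)) q)" .
qed

lemma V_iff: "v \<in> V \<longleftrightarrow> (\<exists>\<nu>. lin \<nu> \<and> v = (\<Sum>(p,q)\<leftarrow>T. sc (\<nu> p) q))"
  unfolding Vr_def by blast
lemma W_iff: "x \<in> W \<longleftrightarrow> (\<exists>\<nu>. lin \<nu> \<and> x = (\<Sum>(p,q)\<leftarrow>T. sc (\<nu> q) p))"
  unfolding Vl_def by blast

lemma V_ideal: assumes "a \<in> A" "v \<in> V" shows "a * v \<in> V"
proof -
  obtain \<nu> where \<nu>: "lin \<nu>" "v = (\<Sum>(p,q)\<leftarrow>T. sc (\<nu> p) q)" using assms(2) V_iff by blast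
  show ?thesis unfolding V_iff \<nu>(2) M_V[OF assms(1) \<nu>(1)]
    by (rule exI[of _ "\<lambda>p. \<nu> (S (\<pi> a) * p)"]) (simp add: lin_ml[OF \<nu>(1)])
qed

lemma W_act: assumes "a \<in> A" "x \<in> W" shows "S (\<pi> a) * x \<in> W"
proof -
  obtain \<nu> where \<nu>: "lin \<nu>" "x = (\<Sum>(p,q)\<leftarrow>T. sc (\<nu> q) p)" using assms(2) W_iff by blast
  show ?thesis unfolding W_iff \<nu>(2) M_W[OF assms(1) \<nu>(1), symmetric]
    by (rule exI[of _ "\<lambda>q. \<nu> (a * q)"]) (simp add: lin_ml[OF \<nu>(1)])
qed

lemma V_subspace: "subspace V"
proof (unfold subspace_def, intro conjI ballI allI)
  show "0 \<in> V" unfolding V_iff by (rule exI[of _ "\<lambda>x. 0"]) (simp add: lin_0 case_prod_unfold)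
next
  fix x y assume "x \<in> V" "y \<in> V"
  then obtain \<nu> \<mu> where "lin \<nu>" "x = (\<Sum>(p,q)\<leftarrow>T. sc (\<nu> p) q)" "lin \<mu>" "y = (\<Sum>(p,q)\<leftarrow>T. sc (\<mu> p) q)"
    unfolding V_iff by blast
  then show "x + y \<in> V" unfolding V_iff
    by (intro exI[of _ "\<lambda>p. \<nu> p + \<mu> p"]) (auto simp: lin_iff sum_list_addf[symmetric] case_prod_unfold scale_left_distrib distrib_left)
next
  fix c x assume "x \<in> V"
  then obtain \<nu> where "lin \<nu>" "x = (\<Sum>(p,q)\<leftarrow>T. sc (\<nu> p) q)" unfolding V_iff by blast
  then show "sc c x \<in> V" unfolding V_iff
    by (intro exI[of _ "\<lambda>p. c * \<nu> p"]) (auto simp: lin_iff linH_sum_list[OF linear_scale_self] case_prod_unfold algebra_simps)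
qed

end

context int_ctx begin

lemma lin_mult_l_sum: "lin \<phi> \<Longrightarrow> \<phi> (p * (\<Sum>i\<leftarrow>l. f i)) = (\<Sum>i\<leftarrow>l. \<phi> (p * f i))"
  by (simp add: sum_list_const_mult[symmetric] lin_sum_list)

lemma V_sub_A: assumes "v \<in> V" shows "v \<in> A"
proof -
  obtain \<nu> where \<nu>: "lin \<nu>" "v = (\<Sum>(p,q)\<leftarrow>T. sc (\<nu> p) q)" using assms V_iff by blast
  define w where "w = (\<Sum>(p,q)\<leftarrow>\<Delta> \<Lambda>. sc (\<nu> p) q)"
  have *: "(\<Sum>(x,y)\<leftarrow>\<Delta> v. \<phi> x * \<psi> (y*\<Lambda>t)) = \<phi> w * \<psi> \<Lambda>t" if ph: "lin \<phi>" and ps: "lin \<psi>" for \<phi> \<psi>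
  proof -
    define L where "L z = (\<Sum>(x,y)\<leftarrow>\<Delta> z. \<phi> x * \<psi> (y*\<Lambda>t))" for z
    have lL: "lin L" unfolding L_def by (rule Delta_lin, rule bil_prod[OF ph lin_mr[OF ps]])
    have tG: "tril (\<lambda>p q1 q2. \<nu> p * (\<phi> q1 * \<psi> (q2*\<Lambda>t)))"
      by (rule trilI, rule lin_mult_const[OF \<nu>(1)], rule lin_const_mult[OF lin_mult_const[OF ph]],
          rule lin_const_mult[OF lin_const_mult[OF lin_mr[OF ps]]])
    have bF: "bil (\<lambda>p r. (\<Sum>(p1,p2)\<leftarrow>\<Delta> p. \<nu> p1 * \<phi> p2) * \<psi> r)"
      by (rule bil_prod[OF Delta_lin[OF bil_prod[OF \<nu>(1) ph]] ps])
    have "L v = (\<Sum>(p,q)\<leftarrow>T. \<nu> p * L q)"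
      unfolding \<nu>(2) by (simp add: lin_sum_list[OF lL] lin_scale[OF lL] case_prod_unfold)
    also have "\<dots> = (\<Sum>(p,q)\<leftarrow>T. \<Sum>(q1,q2)\<leftarrow>\<Delta> q. \<nu> p * (\<phi> q1 * \<psi> (q2*\<Lambda>t)))"
      unfolding L_def by (simp add: sum_list_const_mult[symmetric] case_prod_unfold)
    also have "\<dots> = (\<Sum>(p,q)\<leftarrow>T. \<Sum>(p1,p2)\<leftarrow>\<Delta> p. \<nu> p1 * (\<phi> p2 * \<psi> (q*\<Lambda>t)))"
      using coassoc[OF tG, of \<Lambda>t] by simp
    also have "\<dots> = (\<Sum>(p,q)\<leftarrow>T. (\<Sum>(p1,p2)\<leftarrow>\<Delta> p. \<nu> p1 * \<phi> p2) * \<psi> (q*\<Lambda>t))"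
      by (simp add: sum_list_mult_const[symmetric] case_prod_unfold mult.assoc)
    also have "\<dots> = (\<Sum>(p1,p2)\<leftarrow>\<Delta> \<Lambda>. \<nu> p1 * \<phi> p2) * \<psi> \<Lambda>t"
      using relint_sc[OF bF] by simp
    also have "\<dots> = \<phi> w * \<psi> \<Lambda>t"
      unfolding w_def by (simp add: lin_sum_list[OF ph] lin_scale[OF ph] case_prod_unfold)
    finally show ?thesis unfolding L_def .
  qed
  show ?thesis by (rule A_I(1)[OF *])
qed

lemma anti: assumes ph: "lin \<phi>" and ps: "lin \<psi>"
  shows "\<phi> b * \<psi> \<Lambda>t = (\<Sum>(p,q)\<leftarrow>T. \<Sum>(q1,q2)\<leftarrow>\<Delta> q. \<phi> (b*p*S q1) * \<psi> q2)"
proof -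
  have tG: "tril (\<lambda>p q1 q2. \<phi> (b*p*S q1) * \<psi> q2)"
  proof (rule trilI)
    fix y z show "lin (\<lambda>x. \<phi> (b * x * S y) * \<psi> z)"
      using lin_mult_const[OF lin_mr[OF lin_ml[OF ph, where a=b], where a="S y"]] by (simp add: mult.assoc)
  next
    fix x z show "lin (\<lambda>y. \<phi> (b * x * S y) * \<psi> z)"
      by (rule lin_mult_const[OF lin_S[OF lin_ml[OF ph, where a="b*x"]]])
  qed (auto intro: lin_mult_const lin_const_mult ps lin_S lin_ml ph)
  have "(\<Sum>(p,q)\<leftarrow>T. \<Sum>(q1,q2)\<leftarrow>\<Delta> q. \<phi> (b*p*S q1) * \<psi> q2)
      = (\<Sum>(p,q)\<leftarrow>T. \<Sum>(p1,p2)\<leftarrow>\<Delta> p. \<phi> (b*p1*S p2) * \<psi> q)"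
    using coassoc[OF tG, of \<Lambda>t] by simp
  also have "\<dots> = (\<Sum>(p,q)\<leftarrow>T. \<phi> (b * (\<Sum>(p1,p2)\<leftarrow>\<Delta> p. p1 * S p2)) * \<psi> q)"
    by (simp add: lin_mult_l_sum[OF ph] sum_list_mult_const[symmetric] case_prod_unfold mult.assoc)
  also have "\<dots> = (\<Sum>(p,q)\<leftarrow>T. \<epsilon> p * (\<phi> b * \<psi> q))"
    by (simp add: antip_r sc_mult_r[symmetric] lin_scale[OF ph] mult.assoc)
  also have "\<dots> = \<phi> b * \<psi> (\<Sum>(p,q)\<leftarrow>T. sc (\<epsilon> p) q)"
    by (simp add: lin_sum_list[OF ps] lin_scale[OF ps] sum_list_const_mult[symmetric] case_prod_unfold mult.left_commute)
  also have "\<dots> = \<phi> b * \<psi> \<Lambda>t" by (simp add: counit_l)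
  finally show ?thesis ..
qed

lemma pi_formula: assumes a: "a \<in> A" and ph: "lin \<phi>" and ps: "lin \<psi>"
  shows "\<phi> a * \<psi> \<Lambda>t = (\<Sum>(u1,u2)\<leftarrow>\<Delta> (\<pi> a). \<phi> u1 * \<psi> (S u2 * \<Lambda>t))"
proof -
  define P where "P r s = (\<Sum>(u1,u2)\<leftarrow>\<Delta> r. \<phi> u1 * \<psi> (S u2 * s))" for r s
  have bP: "bil P" unfolding P_def
  proof (rule bilI)
    fix s show "lin (\<lambda>r. \<Sum>(u1,u2)\<leftarrow>\<Delta> r. \<phi> u1 * \<psi> (S u2 * s))"
      by (rule Delta_lin, rule bil_prod[OF ph lin_S[OF lin_mr[OF ps]]])
  next
    fix r show "lin (\<lambda>s. \<Sum>(u1,u2)\<leftarrow>\<Delta> r. \<phi> u1 * \<psi> (S u2 * s))"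
      unfolding case_prod_unfold by (rule lin_sum_listI, rule lin_const_mult, rule lin_ml[OF ps])
  qed
  have tG: "tril (\<lambda>x1 x2 y. \<phi> x1 * \<psi> (S x2 * (y * \<Lambda>t)))"
  proof (rule trilI)
    fix x1 x2 show "lin (\<lambda>y. \<phi> x1 * \<psi> (S x2 * (y * \<Lambda>t)))"
      by (rule lin_const_mult, rule lin_mr, rule lin_ml[OF ps])
  next
    fix x z show "lin (\<lambda>y. \<phi> x * \<psi> (S y * (z * \<Lambda>t)))"
      by (rule lin_const_mult[OF lin_S[OF lin_mr[OF ps, where a="z*\<Lambda>t"]]])
  qed (auto intro: lin_mult_const lin_const_mult ph lin_S lin_mr ps)
  have "P (\<pi> a) \<Lambda>t = (\<Sum>(x,y)\<leftarrow>\<Delta> a. P x (y*\<Lambda>t))" using A_sc[OF a bP] by simp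
  also have "\<dots> = (\<Sum>(x,y)\<leftarrow>\<Delta> a. \<Sum>(x1,x2)\<leftarrow>\<Delta> x. \<phi> x1 * \<psi> (S x2 * (y * \<Lambda>t)))"
    unfolding P_def ..
  also have "\<dots> = (\<Sum>(x,y)\<leftarrow>\<Delta> a. \<Sum>(y1,y2)\<leftarrow>\<Delta> y. \<phi> x * \<psi> (S y1 * (y2 * \<Lambda>t)))"
    using coassoc[OF tG, of a] by simp
  also have "\<dots> = (\<Sum>(x,y)\<leftarrow>\<Delta> a. \<phi> x * \<psi> ((\<Sum>(y1,y2)\<leftarrow>\<Delta> y. S y1 * y2) * \<Lambda>t))"
    by (simp add: lin_mult_r_sum[OF ps] sum_list_const_mult[symmetric] case_prod_unfold mult.assoc)
  also have "\<dots> = (\<Sum>(x,y)\<leftarrow>\<Delta> a. \<epsilon> y * \<phi> x * \<psi> \<Lambda>t)"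
    by (simp add: antip_l sc_mult_l[symmetric] lin_scale[OF ps] mult.assoc mult.left_commute)
  also have "\<dots> = \<phi> a * \<psi> \<Lambda>t"
    by (subst (2) counit_r[of a, symmetric])
       (simp add: lin_sum_list[OF ph] lin_scale[OF ph] sum_list_mult_const[symmetric] case_prod_unfold)
  finally show ?thesis unfolding P_def ..
qed

lemma S_zero: "S 0 = 0" by (rule linH_zero[OF linH_S])

lemma pi_inj: assumes "a \<in> A" "\<pi> a = 0" shows "a = 0"
proof -
  obtain g where g: "lin g" "g \<Lambda>t = 1" using exists_fun_one[OF Lt_nz] by blast
  have "f a = f 0" if f: "lin f" for f
  proof -
    have l: "lin (\<lambda>r. \<Sum>(u1,u2)\<leftarrow>\<Delta> r. f u1 * g (S u2 * \<Lambda>t))"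
      by (rule Delta_lin, rule bil_prod[OF f lin_S[OF lin_mr[OF g(1)]]])
    show ?thesis using pi_formula[OF assms(1) f g(1)] g(2) assms(2) lin_zero[OF l] lin_zero[OF f] by simp
  qed
  then show ?thesis by (rule sep)
qed

lemma faithful: assumes a: "a \<in> A" and z: "\<forall>v\<in>V. a * v = 0" shows "a = 0"
proof -
  define b where "b = S (\<pi> a)"
  have z1: "(\<Sum>(p,q)\<leftarrow>T. sc (\<nu> (b*p)) q) = 0" if "lin \<nu>" for \<nu>
  proof -
    have "(\<Sum>(p,q)\<leftarrow>T. sc (\<nu> p) q) \<in> V" unfolding V_iff using that by blast
    then show ?thesis using M_V[OF a that] z unfolding b_def by simp
  qed
  have te: "teq2 sc (map (\<lambda>(p,q). (b*p, q)) T) []"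
    unfolding teq2_def
  proof (intro allI impI)
    fix f g assume f: "lin f" and g: "lin g"
    have "(\<Sum>(x,y)\<leftarrow>map (\<lambda>(p,q). (b*p, q)) T. f x * g y) = g (\<Sum>(p,q)\<leftarrow>T. sc (f (b*p)) q)"
      by (simp add: lin_sum_list[OF g] lin_scale[OF g] case_prod_unfold o_def)
    also have "\<dots> = 0" using z1[OF f] lin_zero[OF g] by simp
    finally show "(\<Sum>(x,y)\<leftarrow>map (\<lambda>(p,q). (b*p, q)) T. f x * g y) = (\<Sum>(x,y)\<leftarrow>[]. f x * g y)" by simp
  qed
  obtain g where g: "lin g" "g \<Lambda>t = 1" using exists_fun_one[OF Lt_nz] by blast
  have "f b = f 0" if f: "lin f" for f
  proof -
    have bP: "bil (\<lambda>r q. \<Sum>(q1,q2)\<leftarrow>\<Delta> q. f (r * S q1) * g q2)"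
    proof (rule bilI)
      fix y show "lin (\<lambda>r. \<Sum>(q1,q2)\<leftarrow>\<Delta> y. f (r * S q1) * g q2)"
        unfolding case_prod_unfold by (rule lin_sum_listI, rule lin_mult_const, rule lin_mr[OF f])
    next
      fix x show "lin (\<lambda>q. \<Sum>(q1,q2)\<leftarrow>\<Delta> q. f (x * S q1) * g q2)"
        by (rule Delta_lin, rule bil_prod[OF lin_S[OF lin_ml[OF f]] g(1)])
    qed
    have "f b = (\<Sum>(p,q)\<leftarrow>T. \<Sum>(q1,q2)\<leftarrow>\<Delta> q. f (b*p*S q1) * g q2)"
      using anti[OF f g(1), of b] g(2) by simp
    also have "\<dots> = (\<Sum>(x,y)\<leftarrow>map (\<lambda>(p,q). (b*p, q)) T. \<Sum>(q1,q2)\<leftarrow>\<Delta> y. f (x * S q1) * g q2)"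
      by (simp add: case_prod_unfold o_def)
    also have "\<dots> = 0" using BIL[OF te bP] by simp
    finally show ?thesis using lin_zero[OF f] by simp
  qed
  then have "b = 0" by (rule sep)
  then have "S (\<pi> a) = S 0" unfolding b_def S_zero .
  then have "\<pi> a = 0" using bij_is_inj[OF S_bij] by (simp add: inj_eq)
  then show ?thesis by (rule pi_inj[OF a])
qed

end

context int_ctx begin

lemma span_sum_list: "(\<And>x. x \<in> set l \<Longrightarrow> f x \<in> span X) \<Longrightarrow> (\<Sum>x\<leftarrow>l. f x) \<in> span X"
  by (induction l) (auto intro: span_add span_zero)

lemma linH_Delta: assumes "\<And>f. lin f \<Longrightarrow> bil (\<lambda>u1 u2. f (B u1 u2))"
  shows "linH (\<lambda>z. \<Sum>(u1,u2)\<leftarrow>\<Delta> z. B u1 u2)"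
proof (rule linHI)
  fix x y show "(\<Sum>(u1,u2)\<leftarrow>\<Delta> (x+y). B u1 u2) = (\<Sum>(u1,u2)\<leftarrow>\<Delta> x. B u1 u2) + (\<Sum>(u1,u2)\<leftarrow>\<Delta> y. B u1 u2)"
  proof (rule sep)
    fix f assume f: "lin f"
    show "f (\<Sum>(u1,u2)\<leftarrow>\<Delta> (x+y). B u1 u2) = f ((\<Sum>(u1,u2)\<leftarrow>\<Delta> x. B u1 u2) + (\<Sum>(u1,u2)\<leftarrow>\<Delta> y. B u1 u2))"
      using lin_add[OF Delta_lin[OF assms[OF f]], of x y]
      by (simp add: lin_add[OF f] lin_sum_list[OF f] case_prod_unfold)
  qed
next
  fix c x show "(\<Sum>(u1,u2)\<leftarrow>\<Delta> (sc c x). B u1 u2) = sc c (\<Sum>(u1,u2)\<leftarrow>\<Delta> x. B u1 u2)"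
  proof (rule sep)
    fix f assume f: "lin f"
    show "f (\<Sum>(u1,u2)\<leftarrow>\<Delta> (sc c x). B u1 u2) = f (sc c (\<Sum>(u1,u2)\<leftarrow>\<Delta> x. B u1 u2))"
      using lin_scale[OF Delta_lin[OF assms[OF f]], of c x]
      by (simp add: lin_scale[OF f] lin_sum_list[OF f] case_prod_unfold)
  qed
qed

definition Sinv where "Sinv = inv S"

lemma S_Sinv: "S (Sinv y) = y" unfolding Sinv_def using S_bij by (simp add: bij_is_surj surj_f_inv_f)
lemma Sinv_S: "Sinv (S y) = y" unfolding Sinv_def using S_bij by (simp add: bij_is_inj inv_f_f)

lemma linH_Sinv: "linH Sinv"
proof (rule linHI)
  have inj: "inj S" using S_bij bij_is_inj by blast
  fix x y
  have "S (Sinv (x + y)) = S (Sinv x + Sinv y)" by (simp add: linH_add[OF linH_S] S_Sinv)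
  then show "Sinv (x + y) = Sinv x + Sinv y" by (rule injD[OF inj])
next
  have inj: "inj S" using S_bij bij_is_inj by blast
  fix c x
  have "S (Sinv (sc c x)) = S (sc c (Sinv x))" by (simp add: linH_scale[OF linH_S] S_Sinv)
  then show "Sinv (sc c x) = sc c (Sinv x)" by (rule injD[OF inj])
qed

lemma span_linH: assumes "linH h" shows "h ` span X = span (h ` X)"
  using module_hom.span_image[OF module_hom_iff_linear[THEN iffD2, OF assms]] by simp

lemma finite_dim: "\<exists>B. finite B \<and> A \<subseteq> span B"
proof -
  obtain g where g: "lin g" "g \<Lambda>t = 1" using exists_fun_one[OF Lt_nz] by blast
  obtain E where E: "finite E" "\<And>x. x \<in> fst ` set T \<Longrightarrow> x = (\<Sum>e\<in>E. sc (rep x e) e)"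
    using expand_finite[of "fst ` set T"] by blast
  define ve where "ve e = (\<Sum>(p,q)\<leftarrow>T. sc (rep p e) q)" for e
  have ve: "ve e \<in> V" for e unfolding ve_def V_iff using lin_rep by blast
  define K where "K e z = (\<Sum>(r1,r2)\<leftarrow>\<Delta> z. sc (g r2) (e * S r1))" for e z
  define Kp where "Kp z = (\<Sum>(u1,u2)\<leftarrow>\<Delta> z. sc (g (S u2 * \<Lambda>t)) u1)" for z
  define Q where "Q = snd ` set T"
  have K_lin: "linH (K e)" for e unfolding K_def
  proof (rule linH_Delta)
    fix f assume f: "lin f"
    show "bil (\<lambda>u1 u2. f (sc (g u2) (e * S u1)))"
      using bil_prod[OF lin_S[OF lin_ml[OF f, where a=e]] g(1)] by (simp add: lin_scale[OF f] mult.commute)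
  qed
  have Kp_lin: "linH Kp" unfolding Kp_def
  proof (rule linH_Delta)
    fix f assume f: "lin f"
    show "bil (\<lambda>u1 u2. f (sc (g (S u2 * \<Lambda>t)) u1))"
      using bil_prod[OF f lin_S[OF lin_mr[OF g(1), where a=\<Lambda>t]]] by (simp add: lin_scale[OF f] mult.commute)
  qed
  have VQ: "V \<subseteq> span Q"
  proof
    fix v assume "v \<in> V"
    then obtain \<nu> where v: "v = (\<Sum>(p,q)\<leftarrow>T. sc (\<nu> p) q)" using V_iff by blast
    have "(\<Sum>(p,q)\<leftarrow>T. sc (\<nu> p) q) \<in> span Q" unfolding Q_def case_prod_unfold
      by (rule span_sum_list, rule span_scale, rule span_base) auto
    then show "v \<in> span Q" using v by simp
  qed
  have SpiA: "S (\<pi> a) = (\<Sum>e\<in>E. K e (a * ve e))" if a: "a \<in> A" for a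
  proof (rule sep)
    fix f assume f: "lin f"
    define Psi where "Psi r q = (\<Sum>(q1,q2)\<leftarrow>\<Delta> q. f (r * S q1) * g q2)" for r q
    have bP: "bil Psi" unfolding Psi_def
    proof (rule bilI)
      fix y show "lin (\<lambda>r. \<Sum>(q1,q2)\<leftarrow>\<Delta> y. f (r * S q1) * g q2)"
        unfolding case_prod_unfold by (rule lin_sum_listI, rule lin_mult_const, rule lin_mr[OF f])
    next
      fix x show "lin (\<lambda>q. \<Sum>(q1,q2)\<leftarrow>\<Delta> q. f (x * S q1) * g q2)"
        by (rule Delta_lin, rule bil_prod[OF lin_S[OF lin_ml[OF f]] g(1)])
    qed
    have fK: "f (K e z) = Psi e z" for e z
      unfolding K_def Psi_def by (simp add: lin_sum_list[OF f] lin_scale[OF f] case_prod_unfold mult.commute)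
    have "f (S (\<pi> a)) = (\<Sum>(p,q)\<leftarrow>T. Psi (S (\<pi> a) * p) q)"
      using anti[OF f g(1), of "S (\<pi> a)"] g(2) unfolding Psi_def by (simp add: mult.assoc)
    also have "\<dots> = (\<Sum>(p,q)\<leftarrow>T. Psi p (a * q))" using M_bil[OF a bP] by simp
    also have "\<dots> = (\<Sum>(p,q)\<leftarrow>T. \<Sum>e\<in>E. rep p e * Psi e (a * q))"
    proof (rule arg_cong[where f=sum_list], rule map_cong[OF refl], clarify)
      fix p q assume "(p,q) \<in> set T"
      then have "p \<in> fst ` set T" by force
      then show "Psi p (a * q) = (\<Sum>e\<in>E. rep p e * Psi e (a * q))"
        using lin_expand[OF bil_l[OF bP] E(2)] by blast
    qed
    also have "\<dots> = (\<Sum>e\<in>E. \<Sum>(p,q)\<leftarrow>T. rep p e * Psi e (a * q))"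
      using sum_list_sum_swap[where f="\<lambda>pq e. rep (fst pq) e * Psi e (a * snd pq)" and xs=T and E=E]
      by (simp add: case_prod_unfold)
    also have "\<dots> = (\<Sum>e\<in>E. Psi e (a * ve e))"
    proof (rule sum.cong[OF refl])
      fix e
      have l: "lin (\<lambda>z. Psi e (a * z))" by (rule lin_ml[OF bil_r[OF bP]])
      show "(\<Sum>(p,q)\<leftarrow>T. rep p e * Psi e (a * q)) = Psi e (a * ve e)"
        unfolding ve_def by (simp add: lin_sum_list[OF l] lin_scale[OF l] case_prod_unfold)
    qed
    also have "\<dots> = f (\<Sum>e\<in>E. K e (a * ve e))" by (simp add: lin_sum[OF f] fK)
    finally show "f (S (\<pi> a)) = f (\<Sum>e\<in>E. K e (a * ve e))" .
  qed
  define F0 where "F0 = (\<Union>e\<in>E. K e ` Q)"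
  have F0: "finite F0" unfolding F0_def Q_def using E(1) by auto
  have SpiF: "S (\<pi> a) \<in> span F0" if a: "a \<in> A" for a
    unfolding SpiA[OF a]
  proof (rule span_sum)
    fix e assume e: "e \<in> E"
    have "a * ve e \<in> span Q" using V_ideal[OF a ve] VQ by blast
    then have "K e (a * ve e) \<in> span (K e ` Q)" using span_linH[OF K_lin] by blast
    also have "span (K e ` Q) \<subseteq> span F0" unfolding F0_def using e by (intro span_mono) auto
    finally show "K e (a * ve e) \<in> span F0" .
  qed
  have aK: "a = Kp (\<pi> a)" if a: "a \<in> A" for a
  proof (rule sep)
    fix f assume f: "lin f"
    show "f a = f (Kp (\<pi> a))"
      using pi_formula[OF a f g(1)] g(2) unfolding Kp_def
      by (simp add: lin_sum_list[OF f] lin_scale[OF f] case_prod_unfold mult.commute)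
  qed
  define h where "h z = Kp (Sinv z)" for z
  have hl: "linH h" unfolding h_def by (rule linH_comp[OF Kp_lin linH_Sinv])
  have "A \<subseteq> span (h ` F0)"
  proof
    fix a assume a: "a \<in> A"
    have "a = h (S (\<pi> a))" unfolding h_def Sinv_S by (rule aK[OF a])
    also have "\<dots> \<in> h ` span F0" using SpiF[OF a] by blast
    finally show "a \<in> span (h ` F0)" using span_linH[OF hl] by blast
  qed
  then show ?thesis using F0 by (intro exI[of _ "h ` F0"]) auto
qed

end

context int_ctx begin

lemma Vsum: "lin f \<Longrightarrow> (\<Sum>(p,q)\<leftarrow>T. sc (f p) q) \<in> V" unfolding V_iff by blast

lemma ext:
  assumes \<nu>: "\<nu> \<in> dual_on sc V" shows "\<exists>\<nu>'. lin \<nu>' \<and> (\<forall>v\<in>V. \<nu>' v = \<nu> v)"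
proof -
  interpret P: vector_space_pair sc "(*) :: 'k \<Rightarrow> 'k \<Rightarrow> 'k"
    unfolding vector_space_pair_def using VS VK by blast
  obtain B where B: "B \<subseteq> V" "independent B" "V \<subseteq> span B" by (rule maximal_independent_subset)
  obtain g where g: "Vector_Spaces.linear sc (*) g" "\<forall>x\<in>B. g x = \<nu> x"
    using P.linear_independent_extend[OF B(2)] by blast
  have lg: "lin g" unfolding lin_fun_def by (rule g(1))
  have nadd: "\<nu> (x + y) = \<nu> x + \<nu> y" and nsc: "\<nu> (sc c x) = c * \<nu> x" if "x \<in> V" "y \<in> V" for x y c
    using \<nu> that unfolding dual_on_def by auto
  have "v \<in> {x. x \<in> V \<and> g x = \<nu> x}" if "v \<in> span B" for v
  proof (rule span_subspace_induct[OF that])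
    show "subspace {x. x \<in> V \<and> g x = \<nu> x}"
    proof (unfold subspace_def, intro conjI ballI allI)
      have "0 \<in> V" using V_subspace subspace_0 by blast
      moreover have "\<nu> 0 = 0" using nsc[of 0 0 0] \<open>0 \<in> V\<close> by simp
      ultimately show "0 \<in> {x. x \<in> V \<and> g x = \<nu> x}" using lin_zero[OF lg] by simp
    next
      fix x y assume "x \<in> {x. x \<in> V \<and> g x = \<nu> x}" "y \<in> {x. x \<in> V \<and> g x = \<nu> x}"
      then show "x + y \<in> {x. x \<in> V \<and> g x = \<nu> x}"
        using V_subspace subspace_add nadd lin_add[OF lg] by auto
    next
      fix c x assume "x \<in> {x. x \<in> V \<and> g x = \<nu> x}"
      then show "sc c x \<in> {x. x \<in> V \<and> g x = \<nu> x}"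
        using V_subspace subspace_scale nsc[of x x c] lin_scale[OF lg] by auto
    qed
  next
    fix x assume "x \<in> B" then show "x \<in> {x. x \<in> V \<and> g x = \<nu> x}" using B g by auto
  qed
  then show ?thesis using lg B(3) by blast
qed

lemma Umap_eq: assumes "lin \<nu>'" "\<forall>v\<in>V. \<nu>' v = \<nu> v"
  shows "Umap sc \<Delta> \<Lambda>t \<nu> = (\<Sum>(p,q)\<leftarrow>T. sc (\<nu>' q) p)"
proof -
  define \<nu>'' where "\<nu>'' = (SOME \<nu>'. lin \<nu>' \<and> (\<forall>v\<in>V. \<nu>' v = \<nu> v))"
  have n: "lin \<nu>'' \<and> (\<forall>v\<in>V. \<nu>'' v = \<nu> v)" unfolding \<nu>''_def by (rule someI[of _ \<nu>'], use assms in blast)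
  have "(\<Sum>(p,q)\<leftarrow>T. sc (\<nu>'' q) p) = (\<Sum>(p,q)\<leftarrow>T. sc (\<nu>' q) p)"
  proof (rule sep)
    fix f assume f: "lin f"
    have m: "(\<Sum>(p,q)\<leftarrow>T. sc (f p) q) \<in> V" by (rule Vsum[OF f])
    have "f (\<Sum>(p,q)\<leftarrow>T. sc (\<nu>'' q) p) = \<nu>'' (\<Sum>(p,q)\<leftarrow>T. sc (f p) q)"
      using n by (simp add: lin_sum_list[OF f] lin_scale[OF f] lin_sum_list lin_scale case_prod_unfold mult.commute)
    also have "\<dots> = \<nu>' (\<Sum>(p,q)\<leftarrow>T. sc (f p) q)" using n assms m by simp
    also have "\<dots> = f (\<Sum>(p,q)\<leftarrow>T. sc (\<nu>' q) p)"
      using assms(1) by (simp add: lin_sum_list[OF f] lin_scale[OF f] lin_sum_list lin_scale case_prod_unfold mult.commute)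
    finally show "f (\<Sum>(p,q)\<leftarrow>T. sc (\<nu>'' q) p) = f (\<Sum>(p,q)\<leftarrow>T. sc (\<nu>' q) p)" .
  qed
  then show ?thesis unfolding Umap_def Let_def \<nu>''_def by simp
qed

lemma part4:
  "(\<forall>\<nu>\<in>dual_on sc V. \<forall>a\<in>A. dual_act V \<nu> a \<in> dual_on sc V)
      \<and> bij_betw (Umap sc \<Delta> \<Lambda>t) (dual_on sc V) W
      \<and> (\<forall>\<nu>\<in>dual_on sc V. \<forall>\<mu>\<in>dual_on sc V.
            Umap sc \<Delta> \<Lambda>t (\<lambda>v. \<nu> v + \<mu> v) = Umap sc \<Delta> \<Lambda>t \<nu> + Umap sc \<Delta> \<Lambda>t \<mu>)
      \<and> (\<forall>c. \<forall>\<nu>\<in>dual_on sc V. Umap sc \<Delta> \<Lambda>t (\<lambda>v. c * \<nu> v) = sc c (Umap sc \<Delta> \<Lambda>t \<nu>))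
      \<and> (\<forall>\<nu>\<in>dual_on sc V. \<forall>a\<in>A.
            Umap sc \<Delta> \<Lambda>t (dual_act V \<nu> a) = S (\<pi> a) * Umap sc \<Delta> \<Lambda>t \<nu>)"
proof (intro conjI ballI allI)
  fix \<nu> a assume \<nu>: "\<nu> \<in> dual_on sc V" and a: "a \<in> A"
  have nadd: "\<nu> (x + y) = \<nu> x + \<nu> y" and nsc: "\<nu> (sc c x) = c * \<nu> x" if "x \<in> V" "y \<in> V" for x y c
    using \<nu> that unfolding dual_on_def by auto
  show "dual_act V \<nu> a \<in> dual_on sc V"
    unfolding dual_on_def dual_act_def
    using V_subspace subspace_add subspace_scale V_ideal[OF a] nadd nsc
    by (auto simp: distrib_left sc_mult_r[symmetric])
next
  show "bij_betw (Umap sc \<Delta> \<Lambda>t) (dual_on sc V) W"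
    unfolding bij_betw_def
  proof (intro conjI)
    show "inj_on (Umap sc \<Delta> \<Lambda>t) (dual_on sc V)"
    proof (rule inj_onI)
      fix \<nu> \<mu> assume \<nu>: "\<nu> \<in> dual_on sc V" and \<mu>: "\<mu> \<in> dual_on sc V"
        and eq: "Umap sc \<Delta> \<Lambda>t \<nu> = Umap sc \<Delta> \<Lambda>t \<mu>"
      obtain \<nu>' where \<nu>': "lin \<nu>'" "\<forall>v\<in>V. \<nu>' v = \<nu> v" using ext[OF \<nu>] by blast
      obtain \<mu>' where \<mu>': "lin \<mu>'" "\<forall>v\<in>V. \<mu>' v = \<mu> v" using ext[OF \<mu>] by blast
      have eq2: "(\<Sum>(p,q)\<leftarrow>T. sc (\<nu>' q) p) = (\<Sum>(p,q)\<leftarrow>T. sc (\<mu>' q) p)"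
        using eq Umap_eq[OF \<nu>'] Umap_eq[OF \<mu>'] by simp
      show "\<nu> = \<mu>"
      proof
        fix v show "\<nu> v = \<mu> v"
        proof (cases "v \<in> V")
          case True
          then obtain \<psi> where \<psi>: "lin \<psi>" "v = (\<Sum>(p,q)\<leftarrow>T. sc (\<psi> p) q)" using V_iff by blast
          have "\<nu> v = \<nu>' v" using \<nu>'(2) True by simp
          also have "\<dots> = \<psi> (\<Sum>(p,q)\<leftarrow>T. sc (\<nu>' q) p)" unfolding \<psi>(2)
            by (simp add: lin_sum_list[OF \<psi>(1)] lin_scale[OF \<psi>(1)] lin_sum_list[OF \<nu>'(1)] lin_scale[OF \<nu>'(1)] case_prod_unfold mult.commute)
          also have "\<dots> = \<psi> (\<Sum>(p,q)\<leftarrow>T. sc (\<mu>' q) p)" using eq2 by simp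
          also have "\<dots> = \<mu>' v" unfolding \<psi>(2)
            by (simp add: lin_sum_list[OF \<psi>(1)] lin_scale[OF \<psi>(1)] lin_sum_list[OF \<mu>'(1)] lin_scale[OF \<mu>'(1)] case_prod_unfold mult.commute)
          also have "\<dots> = \<mu> v" using \<mu>'(2) True by simp
          finally show ?thesis .
        next
          case False then show ?thesis using \<nu> \<mu> unfolding dual_on_def by auto
        qed
      qed
    qed
  next
    show "Umap sc \<Delta> \<Lambda>t ` dual_on sc V = W"
    proof
      show "Umap sc \<Delta> \<Lambda>t ` dual_on sc V \<subseteq> W"
      proof
        fix x assume "x \<in> Umap sc \<Delta> \<Lambda>t ` dual_on sc V"
        then obtain \<nu> where \<nu>: "\<nu> \<in> dual_on sc V" "x = Umap sc \<Delta> \<Lambda>t \<nu>" by blast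
        obtain \<nu>' where \<nu>': "lin \<nu>'" "\<forall>v\<in>V. \<nu>' v = \<nu> v" using ext[OF \<nu>(1)] by blast
        show "x \<in> W" unfolding W_iff \<nu>(2) Umap_eq[OF \<nu>'] using \<nu>'(1) by blast
      qed
    next
      show "W \<subseteq> Umap sc \<Delta> \<Lambda>t ` dual_on sc V"
      proof
        fix x assume "x \<in> W"
        then obtain \<nu> where \<nu>: "lin \<nu>" "x = (\<Sum>(p,q)\<leftarrow>T. sc (\<nu> q) p)" using W_iff by blast
        define \<mu> where "\<mu> v = (if v \<in> V then \<nu> v else 0)" for v
        have "\<mu> \<in> dual_on sc V" unfolding dual_on_def \<mu>_def
          using V_subspace subspace_add subspace_scale lin_add[OF \<nu>(1)] lin_scale[OF \<nu>(1)] by auto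
        moreover have "Umap sc \<Delta> \<Lambda>t \<mu> = x" using Umap_eq[OF \<nu>(1), of \<mu>] \<nu>(2) unfolding \<mu>_def by simp
        ultimately show "x \<in> Umap sc \<Delta> \<Lambda>t ` dual_on sc V" by blast
      qed
    qed
  qed
next
  fix \<nu> \<mu> assume \<nu>: "\<nu> \<in> dual_on sc V" and \<mu>: "\<mu> \<in> dual_on sc V"
  obtain \<nu>' where \<nu>': "lin \<nu>'" "\<forall>v\<in>V. \<nu>' v = \<nu> v" using ext[OF \<nu>] by blast
  obtain \<mu>' where \<mu>': "lin \<mu>'" "\<forall>v\<in>V. \<mu>' v = \<mu> v" using ext[OF \<mu>] by blast
  have l: "lin (\<lambda>x. \<nu>' x + \<mu>' x)" using \<nu>'(1) \<mu>'(1) by (simp add: lin_iff algebra_simps)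
  have "Umap sc \<Delta> \<Lambda>t (\<lambda>v. \<nu> v + \<mu> v) = (\<Sum>(p,q)\<leftarrow>T. sc (\<nu>' q + \<mu>' q) p)"
    by (rule Umap_eq[OF l]) (use \<nu>'(2) \<mu>'(2) in simp)
  also have "\<dots> = (\<Sum>(p,q)\<leftarrow>T. sc (\<nu>' q) p) + (\<Sum>(p,q)\<leftarrow>T. sc (\<mu>' q) p)"
    by (simp add: case_prod_unfold scale_left_distrib sum_list_addf)
  finally show "Umap sc \<Delta> \<Lambda>t (\<lambda>v. \<nu> v + \<mu> v) = Umap sc \<Delta> \<Lambda>t \<nu> + Umap sc \<Delta> \<Lambda>t \<mu>"
    using Umap_eq[OF \<nu>'] Umap_eq[OF \<mu>'] by simp
next
  fix c \<nu> assume \<nu>: "\<nu> \<in> dual_on sc V"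
  obtain \<nu>' where \<nu>': "lin \<nu>'" "\<forall>v\<in>V. \<nu>' v = \<nu> v" using ext[OF \<nu>] by blast
  have l: "lin (\<lambda>x. c * \<nu>' x)" by (rule lin_const_mult[OF \<nu>'(1)])
  have "Umap sc \<Delta> \<Lambda>t (\<lambda>v. c * \<nu> v) = (\<Sum>(p,q)\<leftarrow>T. sc (c * \<nu>' q) p)"
    by (rule Umap_eq[OF l]) (use \<nu>'(2) in simp)
  also have "\<dots> = sc c (\<Sum>(p,q)\<leftarrow>T. sc (\<nu>' q) p)"
    by (simp add: case_prod_unfold linH_sum_list[OF linear_scale_self])
  finally show "Umap sc \<Delta> \<Lambda>t (\<lambda>v. c * \<nu> v) = sc c (Umap sc \<Delta> \<Lambda>t \<nu>)"
    using Umap_eq[OF \<nu>'] by simp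
next
  fix \<nu> a assume \<nu>: "\<nu> \<in> dual_on sc V" and a: "a \<in> A"
  obtain \<nu>' where \<nu>': "lin \<nu>'" "\<forall>v\<in>V. \<nu>' v = \<nu> v" using ext[OF \<nu>] by blast
  have l: "lin (\<lambda>x. \<nu>' (a * x))" by (rule lin_ml[OF \<nu>'(1)])
  have "Umap sc \<Delta> \<Lambda>t (dual_act V \<nu> a) = (\<Sum>(p,q)\<leftarrow>T. sc (\<nu>' (a * q)) p)"
    by (rule Umap_eq[OF l]) (use \<nu>'(2) V_ideal[OF a] in \<open>simp add: dual_act_def\<close>)
  also have "\<dots> = S (\<pi> a) * (\<Sum>(p,q)\<leftarrow>T. sc (\<nu>' q) p)" by (rule M_W[OF a \<nu>'(1)])
  finally show "Umap sc \<Delta> \<Lambda>t (dual_act V \<nu> a) = S (\<pi> a) * Umap sc \<Delta> \<Lambda>t \<nu>"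
    using Umap_eq[OF \<nu>'] by simp
qed

end

context int_ctx begin

lemma part3:
  "(\<forall>a\<in>A. \<forall>x\<in>W. S (\<pi> a) * x \<in> W)
      \<and> (\<forall>x\<in>W. S (\<pi> 1) * x = x)
      \<and> (\<forall>a\<in>A. \<forall>b\<in>A. \<forall>x\<in>W. S (\<pi> (a * b)) * x = S (\<pi> b) * (S (\<pi> a) * x))
      \<and> (\<forall>a\<in>A. \<forall>b\<in>A. \<forall>x\<in>W. S (\<pi> (a + b)) * x = S (\<pi> a) * x + S (\<pi> b) * x)
      \<and> (\<forall>c. \<forall>a\<in>A. \<forall>x\<in>W. S (\<pi> (sc c a)) * x = sc c (S (\<pi> a) * x))
      \<and> (\<forall>a\<in>A. \<forall>x\<in>W. \<forall>y\<in>W. S (\<pi> a) * (x + y) = S (\<pi> a) * x + S (\<pi> a) * y)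
      \<and> (\<forall>c. \<forall>a\<in>A. \<forall>x\<in>W. S (\<pi> a) * sc c x = sc c (S (\<pi> a) * x))"
proof (intro conjI ballI allI)
  fix a x assume "a \<in> A" "x \<in> W" then show "S (\<pi> a) * x \<in> W" by (rule W_act)
next
  fix x assume "x \<in> W"
  then obtain \<nu> where \<nu>: "lin \<nu>" "x = (\<Sum>(p,q)\<leftarrow>T. sc (\<nu> q) p)" using W_iff by blast
  show "S (\<pi> 1) * x = x" using M_W[OF one_A(1) \<nu>(1)] \<nu>(2) by simp
next
  fix a b x assume a: "a \<in> A" and b: "b \<in> A" and "x \<in> W"
  then obtain \<nu> where \<nu>: "lin \<nu>" "x = (\<Sum>(p,q)\<leftarrow>T. sc (\<nu> q) p)" using W_iff by blast
  have "S (\<pi> (a * b)) * x = (\<Sum>(p,q)\<leftarrow>T. sc (\<nu> (a * b * q)) p)"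
    using M_W[OF mult_A(1)[OF a b] \<nu>(1)] \<nu>(2) by simp
  also have "\<dots> = S (\<pi> b) * (\<Sum>(p,q)\<leftarrow>T. sc (\<nu> (a * q)) p)"
    using M_W[OF b lin_ml[OF \<nu>(1), where a=a]] by (simp add: mult.assoc)
  also have "\<dots> = S (\<pi> b) * (S (\<pi> a) * x)"
    using M_W[OF a \<nu>(1)] \<nu>(2) by simp
  finally show "S (\<pi> (a * b)) * x = S (\<pi> b) * (S (\<pi> a) * x)" .
next
  fix a b x assume a: "a \<in> A" and b: "b \<in> A" and "x \<in> W"
  then obtain \<nu> where \<nu>: "lin \<nu>" "x = (\<Sum>(p,q)\<leftarrow>T. sc (\<nu> q) p)" using W_iff by blast
  have "S (\<pi> (a + b)) * x = (\<Sum>(p,q)\<leftarrow>T. sc (\<nu> ((a + b) * q)) p)"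
    using M_W[OF add_A(1)[OF a b] \<nu>(1)] \<nu>(2) by simp
  also have "\<dots> = (\<Sum>(p,q)\<leftarrow>T. sc (\<nu> (a * q)) p) + (\<Sum>(p,q)\<leftarrow>T. sc (\<nu> (b * q)) p)"
    by (simp add: distrib_right lin_add[OF \<nu>(1)] scale_left_distrib sum_list_addf case_prod_unfold)
  also have "\<dots> = S (\<pi> a) * x + S (\<pi> b) * x"
    using M_W[OF a \<nu>(1)] M_W[OF b \<nu>(1)] \<nu>(2) by simp
  finally show "S (\<pi> (a + b)) * x = S (\<pi> a) * x + S (\<pi> b) * x" .
next
  fix c a x assume a: "a \<in> A" and "x \<in> W"
  then obtain \<nu> where \<nu>: "lin \<nu>" "x = (\<Sum>(p,q)\<leftarrow>T. sc (\<nu> q) p)" using W_iff by blast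
  have "S (\<pi> (sc c a)) * x = (\<Sum>(p,q)\<leftarrow>T. sc (\<nu> (sc c a * q)) p)"
    using M_W[OF scale_A(1)[OF a] \<nu>(1)] \<nu>(2) by simp
  also have "\<dots> = sc c (\<Sum>(p,q)\<leftarrow>T. sc (\<nu> (a * q)) p)"
    by (simp add: sc_mult_l[symmetric] lin_scale[OF \<nu>(1)] case_prod_unfold linH_sum_list[OF linear_scale_self])
  also have "\<dots> = sc c (S (\<pi> a) * x)"
    using M_W[OF a \<nu>(1)] \<nu>(2) by simp
  finally show "S (\<pi> (sc c a)) * x = sc c (S (\<pi> a) * x)" .
next
  fix a x y show "S (\<pi> a) * (x + y) = S (\<pi> a) * x + S (\<pi> a) * y" by (simp add: distrib_left)
next
  fix c a x show "S (\<pi> a) * sc c x = sc c (S (\<pi> a) * x)" by (simp add: sc_mult_r)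
qed

lemma main:
  "(\<forall>a\<in>A. teq2 sc (tmul [(1, a)] (\<Delta> \<Lambda>t)) (tmul [(S (\<pi> a), 1)] (\<Delta> \<Lambda>t)))
   \<and> (V \<subseteq> A \<and> module.subspace sc V \<and> (\<forall>a\<in>A. \<forall>v\<in>V. a * v \<in> V)
      \<and> (\<forall>a\<in>A. (\<forall>v\<in>V. a * v = 0) \<longrightarrow> a = 0))
   \<and> (\<exists>B. finite B \<and> A \<subseteq> module.span sc B)
   \<and> ((\<forall>a\<in>A. \<forall>x\<in>W. S (\<pi> a) * x \<in> W)
      \<and> (\<forall>x\<in>W. S (\<pi> 1) * x = x)
      \<and> (\<forall>a\<in>A. \<forall>b\<in>A. \<forall>x\<in>W. S (\<pi> (a * b)) * x = S (\<pi> b) * (S (\<pi> a) * x))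
      \<and> (\<forall>a\<in>A. \<forall>b\<in>A. \<forall>x\<in>W. S (\<pi> (a + b)) * x = S (\<pi> a) * x + S (\<pi> b) * x)
      \<and> (\<forall>c. \<forall>a\<in>A. \<forall>x\<in>W. S (\<pi> (sc c a)) * x = sc c (S (\<pi> a) * x))
      \<and> (\<forall>a\<in>A. \<forall>x\<in>W. \<forall>y\<in>W. S (\<pi> a) * (x + y) = S (\<pi> a) * x + S (\<pi> a) * y)
      \<and> (\<forall>c. \<forall>a\<in>A. \<forall>x\<in>W. S (\<pi> a) * sc c x = sc c (S (\<pi> a) * x)))
   \<and> ((\<forall>\<nu>\<in>dual_on sc V. \<forall>a\<in>A. dual_act V \<nu> a \<in> dual_on sc V)
      \<and> bij_betw (Umap sc \<Delta> \<Lambda>t) (dual_on sc V) W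
      \<and> (\<forall>\<nu>\<in>dual_on sc V. \<forall>\<mu>\<in>dual_on sc V.
            Umap sc \<Delta> \<Lambda>t (\<lambda>v. \<nu> v + \<mu> v) = Umap sc \<Delta> \<Lambda>t \<nu> + Umap sc \<Delta> \<Lambda>t \<mu>)
      \<and> (\<forall>c. \<forall>\<nu>\<in>dual_on sc V. Umap sc \<Delta> \<Lambda>t (\<lambda>v. c * \<nu> v) = sc c (Umap sc \<Delta> \<Lambda>t \<nu>))
      \<and> (\<forall>\<nu>\<in>dual_on sc V. \<forall>a\<in>A.
            Umap sc \<Delta> \<Lambda>t (dual_act V \<nu> a) = S (\<pi> a) * Umap sc \<Delta> \<Lambda>t \<nu>))
   \<and> (non_degenerate sc \<Delta> \<Lambda>t \<longleftrightarrow> V = A)"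
proof (intro conjI)
  show "\<forall>a\<in>A. teq2 sc (tmul [(1, a)] (\<Delta> \<Lambda>t)) (tmul [(S (\<pi> a), 1)] (\<Delta> \<Lambda>t))"
    using M_teq by blast
  show "V \<subseteq> A" using V_sub_A by blast
  show "module.subspace sc V" by (rule V_subspace)
  show "\<forall>a\<in>A. \<forall>v\<in>V. a * v \<in> V" using V_ideal by blast
  show "\<forall>a\<in>A. (\<forall>v\<in>V. a * v = 0) \<longrightarrow> a = 0" using faithful by blast
  show "\<exists>B. finite B \<and> A \<subseteq> module.span sc B" by (rule finite_dim)
  show "non_degenerate sc \<Delta> \<Lambda>t \<longleftrightarrow> V = A"
  proof
    assume "non_degenerate sc \<Delta> \<Lambda>t"
    then have one: "1 \<in> V" unfolding non_degenerate_def .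
    have "A \<subseteq> V" using V_ideal[OF _ one] by force
    then show "V = A" using V_sub_A by blast
  next
    assume "V = A" then show "non_degenerate sc \<Delta> \<Lambda>t" unfolding non_degenerate_def using one_A(1) by simp
  qed
qed (insert part3 part4, simp_all)

end

theorem mainTheorem3:
  fixes sc :: "'k::field \<Rightarrow> 'h::ring_1 \<Rightarrow> 'h"
    and \<Delta> :: "'h \<Rightarrow> ('h \<times> 'h) list" and \<epsilon> :: "'h \<Rightarrow> 'k" and S :: "'h \<Rightarrow> 'h"
    and \<Lambda> \<Lambda>t :: 'h
  assumes hopf: "hopf_algebra sc \<Delta> \<epsilon> S"
    and int: "integral_type sc \<Delta> \<Lambda>"
    and relint: "rel_integral_type sc \<Delta> \<Lambda> \<Lambda>t"
  defines "A \<equiv> Aset sc \<Delta> \<Lambda>t"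
    and "\<pi> \<equiv> piA sc \<Delta> \<Lambda>t"
    and "V \<equiv> Vr sc \<Delta> \<Lambda>t"
    and "W \<equiv> Vl sc \<Delta> \<Lambda>t"
  shows
    "(\<forall>a\<in>A. teq2 sc (tmul [(1, a)] (\<Delta> \<Lambda>t)) (tmul [(S (\<pi> a), 1)] (\<Delta> \<Lambda>t)))
   \<and> \<comment> \<open>(1)\<close>
     (V \<subseteq> A \<and> module.subspace sc V \<and> (\<forall>a\<in>A. \<forall>v\<in>V. a * v \<in> V)
      \<and> (\<forall>a\<in>A. (\<forall>v\<in>V. a * v = 0) \<longrightarrow> a = 0))
   \<and> \<comment> \<open>(2)\<close>
     (\<exists>B. finite B \<and> A \<subseteq> module.span sc B)
   \<and> \<comment> \<open>(3)\<close>
     ((\<forall>a\<in>A. \<forall>x\<in>W. S (\<pi> a) * x \<in> W)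
      \<and> (\<forall>x\<in>W. S (\<pi> 1) * x = x)
      \<and> (\<forall>a\<in>A. \<forall>b\<in>A. \<forall>x\<in>W. S (\<pi> (a * b)) * x = S (\<pi> b) * (S (\<pi> a) * x))
      \<and> (\<forall>a\<in>A. \<forall>b\<in>A. \<forall>x\<in>W. S (\<pi> (a + b)) * x = S (\<pi> a) * x + S (\<pi> b) * x)
      \<and> (\<forall>c. \<forall>a\<in>A. \<forall>x\<in>W. S (\<pi> (sc c a)) * x = sc c (S (\<pi> a) * x))
      \<and> (\<forall>a\<in>A. \<forall>x\<in>W. \<forall>y\<in>W. S (\<pi> a) * (x + y) = S (\<pi> a) * x + S (\<pi> a) * y)
      \<and> (\<forall>c. \<forall>a\<in>A. \<forall>x\<in>W. S (\<pi> a) * sc c x = sc c (S (\<pi> a) * x)))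
   \<and> \<comment> \<open>(4)\<close>
     ((\<forall>\<nu>\<in>dual_on sc V. \<forall>a\<in>A. dual_act V \<nu> a \<in> dual_on sc V)
      \<and> bij_betw (Umap sc \<Delta> \<Lambda>t) (dual_on sc V) W
      \<and> (\<forall>\<nu>\<in>dual_on sc V. \<forall>\<mu>\<in>dual_on sc V.
            Umap sc \<Delta> \<Lambda>t (\<lambda>v. \<nu> v + \<mu> v) = Umap sc \<Delta> \<Lambda>t \<nu> + Umap sc \<Delta> \<Lambda>t \<mu>)
      \<and> (\<forall>c. \<forall>\<nu>\<in>dual_on sc V. Umap sc \<Delta> \<Lambda>t (\<lambda>v. c * \<nu> v) = sc c (Umap sc \<Delta> \<Lambda>t \<nu>))
      \<and> (\<forall>\<nu>\<in>dual_on sc V. \<forall>a\<in>A.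
            Umap sc \<Delta> \<Lambda>t (dual_act V \<nu> a) = S (\<pi> a) * Umap sc \<Delta> \<Lambda>t \<nu>))
   \<and> \<comment> \<open>(5)\<close>
     (non_degenerate sc \<Delta> \<Lambda>t \<longleftrightarrow> V = A)"
proof -
  have I: "int_ctx sc \<Delta> \<epsilon> S \<Lambda> \<Lambda>t"
    unfolding int_ctx_def int_ctx_axioms_def hopf_ctx_def using hopf int relint by blast
  show ?thesis unfolding A_def \<pi>_def V_def W_def by (rule int_ctx.main[OF I])
qed


end
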